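(* Let $\tau$ be a state of $A$. For every $\lambda\ge0$ and every $\mathbf{x}\in\mathbb{R}^{d^2-1}$ with $\mathbf{x},\lambda\mathbf{x}\in\mathcal{S}$, we have $\tilde\Phi_\tau(\lambda\mathbf{x})=\lambda\tilde\Phi_\tau(\mathbf{x})$. Furthermore $\tilde\Phi_\tau(\mathbf{x})\ge0$ for all $\mathbf{x}\in\mathcal{S}$.
   Context: $G$ is a compact group with normalized Haar measure $dg$; finite-dimensional systems $A$ and $R$ carry continuous unitary representations $U_A,U_R$, and $d=d_R$. The $G$-twirl on $RA$ is $\mathcal{G}(M)=\int dg\,(U_R(g)\otimes U_A(g))M(U_R(g)\otimes U_A(g))^\dagger$. $H_{\min}(R|A)_\Omega=-\log_2\inf_{X\ge0}\{\mathrm{tr}[X]:\mathbb{1}_R\otimes X\ge\Omega_{RA}\}$, and $H_\eta(\tau):=H_{\min}(R|A)_{\mathcal{G}(\eta\otimes\tau)}$. Fix traceless Hermitian operators $X_1,\dots,X_{d^2-1}$ on $\mathcal{H}_R$ such that $\{\mathbb{1}/d,X_1,\dots,X_{d^2-1}\}$ is an orthogonal basis of the Hermitian operators and $\|X_k\|_\infty=1/d$. For $\mathbf{x}\in\mathbb{R}^{d^2-1}$ set $\eta(\mathbf{x})=\mathbb{1}/d+\sum_k x_kX_k$, and let $\mathcal{S}$ be the set of $\mathbf{x}$ for which $\eta(\mathbf{x})$ is a state. Define $\Phi_\tau(\mathbf{x})=2^{-H_{\eta(\mathbf{x})}(\tau)}$ and $\tilde\Phi_\tau(\mathbf{x})=\Phi_\tau(\mathbf{x})-\Phi_\tau(\mathbf{0})$.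 *)

theory Defs
  imports "HOL-Analysis.Analysis" "HOL-Probability.Probability" "HOL-Algebra.Group"
    "Jordan_Normal_Form.Schur_Decomposition"
begin

definition mtrace :: "complex mat \<Rightarrow> complex" where
  "mtrace A = (\<Sum>i<dim_row A. A $$ (i,i))"

text \<open>Kronecker (tensor) product; index (i,j) of R tensor A is i * dim A + j.\<close>
definition kron :: "complex mat \<Rightarrow> complex mat \<Rightarrow> complex mat" where
  "kron A B = mat (dim_row A * dim_row B) (dim_col A * dim_col B)
     (\<lambda>(i,j). A $$ (i div dim_row B, j div dim_col B) * B $$ (i mod dim_row B, j mod dim_col B))"

definition hermitian :: "complex mat \<Rightarrow> bool" where
  "hermitian A \<longleftrightarrow> A \<in> carrier_mat (dim_row A) (dim_row A) \<and> mat_adjoint A = A"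

definition psd :: "complex mat \<Rightarrow> bool" where
  "psd A \<longleftrightarrow> A \<in> carrier_mat (dim_row A) (dim_row A) \<and>
     (\<forall>v \<in> carrier_vec (dim_row A).
        Im (conjugate v \<bullet> (A *\<^sub>v v)) = 0 \<and> Re (conjugate v \<bullet> (A *\<^sub>v v)) \<ge> 0)"

definition loewner_le :: "complex mat \<Rightarrow> complex mat \<Rightarrow> bool" where
  "loewner_le A B \<longleftrightarrow> dim_row A = dim_row B \<and> dim_col A = dim_col B \<and> psd (B - A)"

definition is_state :: "nat \<Rightarrow> complex mat \<Rightarrow> bool" where
  "is_state n \<rho> \<longleftrightarrow> \<rho> \<in> carrier_mat n n \<and> psd \<rho> \<and> mtrace \<rho> = 1"

definition unitary_mat :: "nat \<Rightarrow> complex mat \<Rightarrow> bool" where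
  "unitary_mat n U \<longleftrightarrow> U \<in> carrier_mat n n \<and> U * mat_adjoint U = 1\<^sub>m n
     \<and> mat_adjoint U * U = 1\<^sub>m n"

definition vnorm :: "complex vec \<Rightarrow> real" where
  "vnorm v = sqrt (\<Sum>i<dim_vec v. (cmod (v $ i))\<^sup>2)"

definition opnorm :: "complex mat \<Rightarrow> real" where
  "opnorm A = Sup {vnorm (A *\<^sub>v v) | v. v \<in> carrier_vec (dim_col A) \<and> vnorm v = 1}"

definition compact_group :: "('g, 'b) monoid_scheme \<Rightarrow> 'g topology \<Rightarrow> bool" where
  "compact_group G T \<longleftrightarrow> group G \<and> topspace T = carrier G \<and> compact_space T \<and> Hausdorff_space T
     \<and> continuous_map (prod_topology T T) T (\<lambda>(x,y). x \<otimes>\<^bsub>G\<^esub> y)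
     \<and> continuous_map T T (\<lambda>x. inv\<^bsub>G\<^esub> x)"

definition normalized_haar :: "('g, 'b) monoid_scheme \<Rightarrow> 'g topology \<Rightarrow> 'g measure \<Rightarrow> bool" where
  "normalized_haar G T \<mu> \<longleftrightarrow> prob_space \<mu> \<and> space \<mu> = carrier G
     \<and> sets \<mu> = sigma_sets (topspace T) {U. openin T U}
     \<and> (\<forall>g \<in> carrier G. \<forall>E \<in> sets \<mu>. emeasure \<mu> ((\<lambda>h. g \<otimes>\<^bsub>G\<^esub> h) ` E) = emeasure \<mu> E)"

definition unitary_rep :: "('g, 'b) monoid_scheme \<Rightarrow> 'g topology \<Rightarrow> nat \<Rightarrow> ('g \<Rightarrow> complex mat) \<Rightarrow> bool" where
  "unitary_rep G T n U \<longleftrightarrow>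
     (\<forall>g \<in> carrier G. unitary_mat n (U g))
     \<and> (\<forall>g \<in> carrier G. \<forall>h \<in> carrier G. U (g \<otimes>\<^bsub>G\<^esub> h) = U g * U h)
     \<and> (\<forall>i<n. \<forall>j<n. continuous_map T euclidean (\<lambda>g. U g $$ (i,j)))"

definition twirl :: "'g measure \<Rightarrow> ('g \<Rightarrow> complex mat) \<Rightarrow> ('g \<Rightarrow> complex mat) \<Rightarrow> complex mat \<Rightarrow> complex mat" where
  "twirl \<mu> UR UA M = mat (dim_row M) (dim_col M)
     (\<lambda>(i,j). LINT g|\<mu>. (kron (UR g) (UA g) * M * mat_adjoint (kron (UR g) (UA g))) $$ (i,j))"

text \<open>Conditional min-entropy H_min(R|A) of Omega on R tensor A, dim R = dR, dim A = dA.\<close>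
definition Hmin :: "nat \<Rightarrow> nat \<Rightarrow> complex mat \<Rightarrow> real" where
  "Hmin dR dA \<Omega> = - log 2 (Inf {Re (mtrace X) | X. X \<in> carrier_mat dA dA \<and> psd X
                                   \<and> loewner_le \<Omega> (kron (1\<^sub>m dR) X)})"

definition eta :: "nat \<Rightarrow> (nat \<Rightarrow> complex mat) \<Rightarrow> (nat \<Rightarrow> real) \<Rightarrow> complex mat" where
  "eta d X x = mat d d (\<lambda>(i,j). (if i = j then 1 / of_nat d else 0)
                       + (\<Sum>k < d\<^sup>2 - 1. complex_of_real (x k) * X k $$ (i,j)))"

definition Phi :: "'g measure \<Rightarrow> ('g \<Rightarrow> complex mat) \<Rightarrow> ('g \<Rightarrow> complex mat) \<Rightarrow> nat \<Rightarrow> nat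
                    \<Rightarrow> (nat \<Rightarrow> complex mat) \<Rightarrow> complex mat \<Rightarrow> (nat \<Rightarrow> real) \<Rightarrow> real" where
  "Phi \<mu> UR UA d dA X \<tau> x = 2 powr (- Hmin d dA (twirl \<mu> UR UA (kron (eta d X x) \<tau>)))"

definition Phi_tilde :: "'g measure \<Rightarrow> ('g \<Rightarrow> complex mat) \<Rightarrow> ('g \<Rightarrow> complex mat) \<Rightarrow> nat \<Rightarrow> nat
                    \<Rightarrow> (nat \<Rightarrow> complex mat) \<Rightarrow> complex mat \<Rightarrow> (nat \<Rightarrow> real) \<Rightarrow> real" where
  "Phi_tilde \<mu> UR UA d dA X \<tau> x = Phi \<mu> UR UA d dA X \<tau> x - Phi \<mu> UR UA d dA X \<tau> (\<lambda>_. 0)"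

definition state_coeffs :: "nat \<Rightarrow> (nat \<Rightarrow> complex mat) \<Rightarrow> (nat \<Rightarrow> real) set" where
  "state_coeffs d X = {x. is_state d (eta d X x)}"

text \<open>Conditions on the fixed operator basis X_1..X_{d^2-1} (indexed 0..d^2-2).\<close>
definition gen_basis :: "nat \<Rightarrow> (nat \<Rightarrow> complex mat) \<Rightarrow> bool" where
  "gen_basis d X \<longleftrightarrow>
     (\<forall>k < d\<^sup>2 - 1. X k \<in> carrier_mat d d \<and> hermitian (X k) \<and> mtrace (X k) = 0
                     \<and> opnorm (X k) = 1 / real d)
     \<and> (\<forall>k < d\<^sup>2 - 1. \<forall>l < d\<^sup>2 - 1. k \<noteq> l \<longrightarrow> mtrace (mat_adjoint (X k) * X l) = 0)
     \<and> (\<forall>H \<in> carrier_mat d d. hermitian H \<longrightarrow>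
          (\<exists>c0 (c :: nat \<Rightarrow> real). H = mat d d (\<lambda>(i,j). complex_of_real c0 * (if i = j then 1 / of_nat d else 0)
                       + (\<Sum>k < d\<^sup>2 - 1. complex_of_real (c k) * X k $$ (i,j)))))"

end

theory Submission
  imports Defs
begin

unbundle no vec_syntax
no_notation inner (infix "\<bullet>" 70)
lemma adj_dims[simp]: "dim_row (mat_adjoint A) = dim_col A" "dim_col (mat_adjoint A) = dim_row A"
  unfolding mat_adjoint_def by simp_all

lemma adj_index[simp]: "i < dim_col A \<Longrightarrow> j < dim_row A \<Longrightarrow> mat_adjoint A $$ (i,j) = cnj (A $$ (j,i))"
  unfolding mat_adjoint_def by (simp add: mat_of_rows_index)

lemma adj_carrier[simp]: "A \<in> carrier_mat n m \<Longrightarrow> mat_adjoint A \<in> carrier_mat m n"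
  unfolding carrier_mat_def by simp

lemma sum_divmod: "(\<Sum>k<(a::nat)*b. f k) = (\<Sum>p<a. \<Sum>q<b. f (p*b+q))"
proof (induction a)
  case 0 then show ?case by simp
next
  case (Suc a)
  have "{..<Suc a * b} = {..<a*b} \<union> {a*b..<a*b+b}" by auto
  then have "(\<Sum>k<Suc a*b. f k) = (\<Sum>k<a*b. f k) + (\<Sum>k\<in>{a*b..<a*b+b}. f k)"
    by (simp add: sum.union_disjoint ivl_disj_int)
  also have "(\<Sum>k\<in>{a*b..<a*b+b}. f k) = (\<Sum>q<b. f (a*b+q))"
    using sum.atLeastLessThan_shift_0[of f "a*b" "a*b+b"] by (simp add: atLeast0LessThan comp_def)
  finally show ?case using Suc by simp
qed

lemma kron_dims[simp]: "dim_row (kron A B) = dim_row A * dim_row B" "dim_col (kron A B) = dim_col A * dim_col B"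
  unfolding kron_def by simp_all

lemma kron_index[simp]: "i < dim_row A * dim_row B \<Longrightarrow> j < dim_col A * dim_col B \<Longrightarrow>
  kron A B $$ (i,j) = A $$ (i div dim_row B, j div dim_col B) * B $$ (i mod dim_row B, j mod dim_col B)"
  unfolding kron_def by simp

lemma kron_carrier[simp]: "A \<in> carrier_mat a b \<Longrightarrow> B \<in> carrier_mat c e \<Longrightarrow> kron A B \<in> carrier_mat (a*c) (b*e)"
  unfolding carrier_mat_def by simp

lemma divmod_less: "(i::nat) < a * c \<Longrightarrow> i div c < a" "i < a * c \<Longrightarrow> i mod c < c"
proof -
  assume "i < a * c"
  then show "i div c < a" by (simp add: less_mult_imp_div_less)
next
  assume "i < a * c"
  then have "c > 0" by (cases c) auto
  then show "i mod c < c" by simp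
qed

lemma divmod_idx1: "(p::nat) < a \<Longrightarrow> q < c \<Longrightarrow> p * c + q < a * c"
proof -
  assume "p < a" "q < c"
  then have "Suc p * c \<le> a * c" by (intro mult_le_mono1) simp
  then show ?thesis using \<open>q < c\<close> by simp
qed

lemma divmod_idx: "(q::nat) < c \<Longrightarrow> (p*c+q) div c = p" "(q::nat) < c \<Longrightarrow> (p*c+q) mod c = q"
  by simp_all


lemma kron_mult:
  assumes "A \<in> carrier_mat a b" "B \<in> carrier_mat c e" "C \<in> carrier_mat b f" "D \<in> carrier_mat e h"
  shows "kron A B * kron C D = kron (A * C) (B * D)"
proof (rule eq_matI)
  fix i j assume i: "i < dim_row (kron (A * C) (B * D))" and j: "j < dim_col (kron (A * C) (B * D))"
  have i': "i < a*c" and j': "j < f*h" using i j assms by auto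
  have "(kron A B * kron C D) $$ (i,j) = (\<Sum>k<b*e. kron A B $$ (i,k) * kron C D $$ (k,j))"
    using assms i' j' by (simp add: scalar_prod_def atLeast0LessThan)
  also have "\<dots> = (\<Sum>p<b. \<Sum>q<e. kron A B $$ (i,p*e+q) * kron C D $$ (p*e+q,j))"
    by (rule sum_divmod)
  also have "\<dots> = (\<Sum>p<b. \<Sum>q<e. (A $$ (i div c, p) * C $$ (p, j div h)) * (B $$ (i mod c, q) * D $$ (q, j mod h)))"
    using assms i' j' by (intro sum.cong refl) (simp add: divmod_idx divmod_idx1 divmod_less mult_ac)
  also have "\<dots> = (\<Sum>p<b. A $$ (i div c, p) * C $$ (p, j div h)) * (\<Sum>q<e. B $$ (i mod c, q) * D $$ (q, j mod h))"
    by (simp add: sum_product)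
  also have "\<dots> = kron (A * C) (B * D) $$ (i,j)"
    using assms i' j' by (simp add: divmod_less scalar_prod_def atLeast0LessThan)
  finally show "(kron A B * kron C D) $$ (i,j) = kron (A * C) (B * D) $$ (i,j)" .
qed (use assms in auto)

lemma kron_adj:
  assumes "A \<in> carrier_mat a b" "B \<in> carrier_mat c e"
  shows "mat_adjoint (kron A B) = kron (mat_adjoint A) (mat_adjoint B)"
  by (rule eq_matI) (use assms in \<open>auto simp: divmod_less\<close>)

lemma kron_one: "kron (1\<^sub>m a) (1\<^sub>m b) = 1\<^sub>m (a*b)"
proof (rule eq_matI)
  fix i j assume "i < dim_row (1\<^sub>m (a*b))" "j < dim_col (1\<^sub>m (a*b))"
  then have "i < a*b" "j < a*b" by auto
  moreover have "(i div b = j div b \<and> i mod b = j mod b) = (i = j)"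
    by (metis div_mult_mod_eq)
  ultimately show "kron (1\<^sub>m a) (1\<^sub>m b) $$ (i,j) = 1\<^sub>m (a*b) $$ (i,j)"
    by (auto simp: divmod_less)
qed auto

lemma quad_expand:
  fixes A :: "complex mat"
  assumes "A \<in> carrier_mat n n" "v \<in> carrier_vec n" "u \<in> carrier_vec n"
  shows "conjugate u \<bullet> (A *\<^sub>v v) = (\<Sum>i<n. \<Sum>j<n. cnj (u$i) * A$$(i,j) * v$j)"
proof -
  have "conjugate u \<bullet> (A *\<^sub>v v) = (\<Sum>i<n. cnj (u$i) * (\<Sum>j<n. A$$(i,j) * v$j))"
    using assms by (simp add: scalar_prod_def atLeast0LessThan)
  also have "\<dots> = (\<Sum>i<n. \<Sum>j<n. cnj (u$i) * A$$(i,j) * v$j)"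
    by (simp add: sum_distrib_left mult.assoc)
  finally show ?thesis .
qed

lemma triple_index:
  fixes A M :: "complex mat"
  assumes "A \<in> carrier_mat n m" "M \<in> carrier_mat m m" "i < n" "j < n"
  shows "(A * M * mat_adjoint A) $$ (i,j) = (\<Sum>k<m. \<Sum>l<m. A$$(i,k) * M$$(k,l) * cnj (A$$(j,l)))"
proof -
  have "(A * M * mat_adjoint A) $$ (i,j) = (\<Sum>l<m. (\<Sum>k<m. A$$(i,k) * M$$(k,l)) * cnj (A$$(j,l)))"
    using assms by (simp add: scalar_prod_def atLeast0LessThan)
  also have "\<dots> = (\<Sum>l<m. \<Sum>k<m. A$$(i,k) * M$$(k,l) * cnj (A$$(j,l)))"
    by (simp add: sum_distrib_right)
  also have "\<dots> = (\<Sum>k<m. \<Sum>l<m. A$$(i,k) * M$$(k,l) * cnj (A$$(j,l)))"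
    by (rule sum.swap)
  finally show ?thesis .
qed

lemma quad_lin:
  fixes A B :: "complex mat"
  assumes "A \<in> carrier_mat n n" "B \<in> carrier_mat n n" "v \<in> carrier_vec n"
  shows "conjugate v \<bullet> ((a \<cdot>\<^sub>m A + b \<cdot>\<^sub>m B) *\<^sub>v v) = a * (conjugate v \<bullet> (A *\<^sub>v v)) + b * (conjugate v \<bullet> (B *\<^sub>v v))"
proof -
  have c: "a \<cdot>\<^sub>m A + b \<cdot>\<^sub>m B \<in> carrier_mat n n" using assms by auto
  show ?thesis
    unfolding quad_expand[OF c assms(3) assms(3)] quad_expand[OF assms(1) assms(3) assms(3)]
      quad_expand[OF assms(2) assms(3) assms(3)]
  proof -
    have "(\<Sum>i<n. \<Sum>j<n. cnj (v$i) * (a \<cdot>\<^sub>m A + b \<cdot>\<^sub>m B)$$(i,j) * v$j)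
        = (\<Sum>i<n. \<Sum>j<n. a * (cnj (v$i) * A$$(i,j) * v$j) + b * (cnj (v$i) * B$$(i,j) * v$j))"
      using assms by (intro sum.cong refl) (simp add: algebra_simps)
    also have "\<dots> = a * (\<Sum>i<n. \<Sum>j<n. cnj (v$i) * A$$(i,j) * v$j) + b * (\<Sum>i<n. \<Sum>j<n. cnj (v$i) * B$$(i,j) * v$j)"
      by (simp only: sum.distrib sum_distrib_left)
    finally show "(\<Sum>i<n. \<Sum>j<n. cnj (v$i) * (a \<cdot>\<^sub>m A + b \<cdot>\<^sub>m B)$$(i,j) * v$j)
        = a * (\<Sum>i<n. \<Sum>j<n. cnj (v$i) * A$$(i,j) * v$j) + b * (\<Sum>i<n. \<Sum>j<n. cnj (v$i) * B$$(i,j) * v$j)" .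
  qed
qed

lemma quad_diff:
  fixes A B :: "complex mat"
  assumes "A \<in> carrier_mat n n" "B \<in> carrier_mat n n" "v \<in> carrier_vec n"
  shows "conjugate v \<bullet> ((A - B) *\<^sub>v v) = conjugate v \<bullet> (A *\<^sub>v v) - conjugate v \<bullet> (B *\<^sub>v v)"
proof -
  have c: "A - B \<in> carrier_mat n n" using assms by auto
  show ?thesis
    unfolding quad_expand[OF c assms(3) assms(3)] quad_expand[OF assms(1) assms(3) assms(3)]
      quad_expand[OF assms(2) assms(3) assms(3)]
  proof -
    have "(\<Sum>i<n. \<Sum>j<n. cnj (v$i) * (A - B)$$(i,j) * v$j)
        = (\<Sum>i<n. \<Sum>j<n. (cnj (v$i) * A$$(i,j) * v$j) - (cnj (v$i) * B$$(i,j) * v$j))"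
      using assms by (intro sum.cong refl) (simp add: algebra_simps)
    also have "\<dots> = (\<Sum>i<n. \<Sum>j<n. cnj (v$i) * A$$(i,j) * v$j) - (\<Sum>i<n. \<Sum>j<n. cnj (v$i) * B$$(i,j) * v$j)"
      by (simp only: sum_subtractf)
    finally show "(\<Sum>i<n. \<Sum>j<n. cnj (v$i) * (A - B)$$(i,j) * v$j)
        = (\<Sum>i<n. \<Sum>j<n. cnj (v$i) * A$$(i,j) * v$j) - (\<Sum>i<n. \<Sum>j<n. cnj (v$i) * B$$(i,j) * v$j)" .
  qed
qed

lemma psdD: "psd A \<Longrightarrow> A \<in> carrier_mat n n \<Longrightarrow> v \<in> carrier_vec n \<Longrightarrow>
   Im (conjugate v \<bullet> (A *\<^sub>v v)) = 0 \<and> Re (conjugate v \<bullet> (A *\<^sub>v v)) \<ge> 0"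
  unfolding psd_def by auto

lemma psdI: "A \<in> carrier_mat n n \<Longrightarrow> (\<And>v. v \<in> carrier_vec n \<Longrightarrow>
   Im (conjugate v \<bullet> (A *\<^sub>v v)) = 0 \<and> Re (conjugate v \<bullet> (A *\<^sub>v v)) \<ge> 0) \<Longrightarrow> psd A"
  unfolding psd_def by auto

lemma psd_comb:
  assumes "A \<in> carrier_mat n n" "B \<in> carrier_mat n n" "psd A" "psd B" "a \<ge> 0" "b \<ge> 0"
  shows "psd (complex_of_real a \<cdot>\<^sub>m A + complex_of_real b \<cdot>\<^sub>m B)"
proof (rule psdI[of _ n])
  show "complex_of_real a \<cdot>\<^sub>m A + complex_of_real b \<cdot>\<^sub>m B \<in> carrier_mat n n" using assms by auto
  fix v :: "complex vec" assume v: "v \<in> carrier_vec n"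
  note qa = psdD[OF assms(3) assms(1) v] and qb = psdD[OF assms(4) assms(2) v]
  show "Im (conjugate v \<bullet> ((complex_of_real a \<cdot>\<^sub>m A + complex_of_real b \<cdot>\<^sub>m B) *\<^sub>v v)) = 0 \<and>
        Re (conjugate v \<bullet> ((complex_of_real a \<cdot>\<^sub>m A + complex_of_real b \<cdot>\<^sub>m B) *\<^sub>v v)) \<ge> 0"
    unfolding quad_lin[OF assms(1,2) v] using qa qb assms(5,6) by simp
qed

lemma psd_smult:
  assumes "A \<in> carrier_mat n n" "psd A" "a \<ge> 0"
  shows "psd (complex_of_real a \<cdot>\<^sub>m A)"
proof -
  have "complex_of_real a \<cdot>\<^sub>m A = complex_of_real a \<cdot>\<^sub>m A + complex_of_real 0 \<cdot>\<^sub>m A"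
    using assms by (intro eq_matI) auto
  moreover have "psd (complex_of_real a \<cdot>\<^sub>m A + complex_of_real 0 \<cdot>\<^sub>m A)"
    by (rule psd_comb) (use assms in auto)
  ultimately show ?thesis by metis
qed

lemma mtrace_lin:
  fixes A B :: "complex mat"
  assumes "A \<in> carrier_mat n n" "B \<in> carrier_mat n n"
  shows "mtrace (a \<cdot>\<^sub>m A + b \<cdot>\<^sub>m B) = a * mtrace A + b * mtrace B"
proof -
  have "mtrace (a \<cdot>\<^sub>m A + b \<cdot>\<^sub>m B) = (\<Sum>i<n. a * A$$(i,i) + b * B$$(i,i))"
    using assms unfolding mtrace_def by (intro sum.cong) auto
  also have "\<dots> = a * mtrace A + b * mtrace B"
    using assms unfolding mtrace_def by (simp add: sum.distrib sum_distrib_left)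
  finally show ?thesis .
qed

lemma herm_quad_real:
  fixes A :: "complex mat"
  assumes "A \<in> carrier_mat n n" "mat_adjoint A = A" "v \<in> carrier_vec n"
  shows "Im (conjugate v \<bullet> (A *\<^sub>v v)) = 0"
proof -
  have h: "A $$ (j,i) = cnj (A $$ (i,j))" if "i < n" "j < n" for i j
  proof -
    have "A $$ (j,i) = mat_adjoint A $$ (j,i)" using assms(2) by simp
    also have "\<dots> = cnj (A $$ (i,j))" using assms(1) that by simp
    finally show ?thesis .
  qed
  let ?z = "conjugate v \<bullet> (A *\<^sub>v v)"
  have "cnj ?z = (\<Sum>i<n. \<Sum>j<n. v$i * cnj (A$$(i,j)) * cnj (v$j))"
    unfolding quad_expand[OF assms(1) assms(3) assms(3)] by (simp add: cnj_sum)
  also have "\<dots> = (\<Sum>i<n. \<Sum>j<n. cnj (v$j) * A$$(j,i) * v$i)"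
  proof (intro sum.cong refl)
    fix i j assume "i \<in> {..<n}" "j \<in> {..<n}"
    then have "i < n" "j < n" by auto
    then have e: "cnj (A$$(i,j)) = A$$(j,i)" by (rule h[symmetric])
    show "v$i * cnj (A$$(i,j)) * cnj (v$j) = cnj (v$j) * A$$(j,i) * v$i"
      unfolding e by (simp add: mult_ac)
  qed
  also have "\<dots> = ?z"
    unfolding quad_expand[OF assms(1) assms(3) assms(3)] by (rule sum.swap)
  finally have "cnj ?z = ?z" .
  then have "Im (cnj ?z) = Im ?z" by simp
  then show ?thesis by simp
qed

definition sesq :: "nat \<Rightarrow> complex mat \<Rightarrow> (nat \<Rightarrow> complex) \<Rightarrow> (nat \<Rightarrow> complex) \<Rightarrow> complex" where
  "sesq n A u v = (\<Sum>i<n. \<Sum>j<n. cnj (u i) * A$$(i,j) * v j)"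

lemma quad_vec:
  assumes "A \<in> carrier_mat n n"
  shows "conjugate (vec n u) \<bullet> (A *\<^sub>v vec n u) = sesq n A u u"
  unfolding quad_expand[OF assms vec_carrier vec_carrier] sesq_def
  by (intro sum.cong refl) simp

lemma sesq_expand:
  "sesq n A (\<lambda>k. x k + c * y k) (\<lambda>k. x k + c * y k)
    = sesq n A x x + c * sesq n A x y + cnj c * sesq n A y x + cnj c * c * sesq n A y y"
proof -
  have "sesq n A (\<lambda>k. x k + c * y k) (\<lambda>k. x k + c * y k)
    = (\<Sum>i<n. \<Sum>j<n. cnj (x i) * A$$(i,j) * x j + c * (cnj (x i) * A$$(i,j) * y j)
        + cnj c * (cnj (y i) * A$$(i,j) * x j) + cnj c * c * (cnj (y i) * A$$(i,j) * y j))"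
    unfolding sesq_def by (intro sum.cong refl) (simp add: algebra_simps)
  also have "\<dots> = sesq n A x x + c * sesq n A x y + cnj c * sesq n A y x + cnj c * c * sesq n A y y"
    unfolding sesq_def by (simp only: sum.distrib sum_distrib_left)
  finally show ?thesis .
qed

lemma sesq_delta:
  assumes "i < n" "j < n"
  shows "sesq n A (\<lambda>k. if k = i then 1 else 0) (\<lambda>k. if k = j then 1 else 0) = A$$(i,j)"
proof -
  have e: "cnj (if k = i then 1 else 0) * A$$(k,l) * (if l = j then 1 else 0)
      = (if k = i then (if l = j then A$$(i,j) else 0) else 0)" for k l
    by simp
  have f: "(\<Sum>l<n. if k = i then (if l = j then A$$(i,j) else 0) else 0) = (if k = i then A$$(i,j) else 0)" for k
    by (cases "k = i") (simp_all add: assms)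
  show ?thesis unfolding sesq_def e f using assms by simp
qed

lemma psd_hermitian:
  assumes A: "A \<in> carrier_mat n n" and h: "\<And>v. v \<in> carrier_vec n \<Longrightarrow> Im (conjugate v \<bullet> (A *\<^sub>v v)) = 0"
  shows "mat_adjoint A = A"
proof (rule eq_matI)
  have hs: "Im (sesq n A u u) = 0" for u
    using h[of "vec n u"] quad_vec[OF A] by simp
  fix j i assume "j < dim_row A" "i < dim_col A"
  then have i: "i < n" and j: "j < n" using A by auto
  define ei where "ei = (\<lambda>k. if k = i then 1 else (0::complex))"
  define ej where "ej = (\<lambda>k. if k = j then 1 else (0::complex))"
  have dii: "sesq n A ei ei = A$$(i,i)" and dij: "sesq n A ei ej = A$$(i,j)"
    and dji: "sesq n A ej ei = A$$(j,i)" and djj: "sesq n A ej ej = A$$(j,j)"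
    unfolding ei_def ej_def using sesq_delta i j by auto
  have r1: "Im (A$$(i,i)) = 0" using hs[of ei] dii by simp
  have r2: "Im (A$$(j,j)) = 0" using hs[of ej] djj by simp
  have "Im (sesq n A (\<lambda>k. ei k + 1 * ej k) (\<lambda>k. ei k + 1 * ej k)) = 0" by (rule hs)
  then have s1: "Im (A$$(i,j)) + Im (A$$(j,i)) = 0"
    unfolding sesq_expand dii dij dji djj using r1 r2 by simp
  have "Im (sesq n A (\<lambda>k. ei k + \<i> * ej k) (\<lambda>k. ei k + \<i> * ej k)) = 0" by (rule hs)
  then have s2: "Re (A$$(i,j)) - Re (A$$(j,i)) = 0"
    unfolding sesq_expand dii dij dji djj using r1 r2 by simp
  show "mat_adjoint A $$ (j,i) = A $$ (j,i)"
    using i j A s1 s2 by (auto intro: complex_eqI)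
qed (use A in auto)

lemma unitary_cols:
  assumes "unitary_mat n U" "k < n" "p < n"
  shows "(\<Sum>a<n. cnj (U$$(a,k)) * U$$(a,p)) = (if k = p then 1 else 0)"
proof -
  have U: "U \<in> carrier_mat n n" and e: "mat_adjoint U * U = 1\<^sub>m n"
    using assms(1) unfolding unitary_mat_def by auto
  have "(mat_adjoint U * U) $$ (k,p) = (\<Sum>a<n. cnj (U$$(a,k)) * U$$(a,p))"
    using U assms by (simp add: scalar_prod_def atLeast0LessThan)
  then show ?thesis using e assms by simp
qed

lemma unitary_rows:
  assumes "unitary_mat n U" "k < n" "p < n"
  shows "(\<Sum>a<n. U$$(k,a) * cnj (U$$(p,a))) = (if k = p then 1 else 0)"
proof -
  have U: "U \<in> carrier_mat n n" and e: "U * mat_adjoint U = 1\<^sub>m n"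
    using assms(1) unfolding unitary_mat_def by auto
  have "(U * mat_adjoint U) $$ (k,p) = (\<Sum>a<n. U$$(k,a) * cnj (U$$(p,a)))"
    using U assms by (simp add: scalar_prod_def atLeast0LessThan)
  then show ?thesis using e assms by simp
qed

lemma trace_unitary:
  assumes "unitary_mat n U" "E \<in> carrier_mat n n"
  shows "mtrace (U * E * mat_adjoint U) = mtrace E"
proof -
  have U: "U \<in> carrier_mat n n" using assms(1) unfolding unitary_mat_def by auto
  have "mtrace (U * E * mat_adjoint U) = (\<Sum>a<n. \<Sum>k<n. \<Sum>l<n. U$$(a,k) * E$$(k,l) * cnj (U$$(a,l)))"
  proof -
    have "mtrace (U * E * mat_adjoint U) = (\<Sum>a<n. (U * E * mat_adjoint U) $$ (a,a))"
      unfolding mtrace_def using U by simp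
    also have "\<dots> = (\<Sum>a<n. \<Sum>k<n. \<Sum>l<n. U$$(a,k) * E$$(k,l) * cnj (U$$(a,l)))"
    proof (intro sum.cong refl)
      fix a assume "a \<in> {..<n}"
      then show "(U * E * mat_adjoint U) $$ (a,a) = (\<Sum>k<n. \<Sum>l<n. U$$(a,k) * E$$(k,l) * cnj (U$$(a,l)))"
        by (intro triple_index[OF U assms(2)]) auto
    qed
    finally show ?thesis .
  qed
  also have "\<dots> = (\<Sum>k<n. \<Sum>l<n. E$$(k,l) * (\<Sum>a<n. cnj (U$$(a,l)) * U$$(a,k)))"
  proof -
    have "(\<Sum>a<n. \<Sum>k<n. \<Sum>l<n. U$$(a,k) * E$$(k,l) * cnj (U$$(a,l)))
        = (\<Sum>k<n. \<Sum>a<n. \<Sum>l<n. U$$(a,k) * E$$(k,l) * cnj (U$$(a,l)))" by (rule sum.swap)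
    also have "\<dots> = (\<Sum>k<n. \<Sum>l<n. \<Sum>a<n. U$$(a,k) * E$$(k,l) * cnj (U$$(a,l)))"
      by (intro sum.cong refl sum.swap)
    also have "\<dots> = (\<Sum>k<n. \<Sum>l<n. E$$(k,l) * (\<Sum>a<n. cnj (U$$(a,l)) * U$$(a,k)))"
      by (simp add: sum_distrib_left mult_ac)
    finally show ?thesis .
  qed
  also have "\<dots> = (\<Sum>k<n. \<Sum>l<n. E$$(k,l) * (if l = k then 1 else 0))"
    using unitary_cols[OF assms(1)] by simp
  also have "\<dots> = (\<Sum>k<n. E$$(k,k))"
  proof (intro sum.cong refl)
    fix k assume k: "k \<in> {..<n}"
    have "(\<Sum>l<n. E$$(k,l) * (if l = k then 1 else 0)) = (\<Sum>l<n. if l = k then E$$(k,k) else 0)"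
      by (intro sum.cong) auto
    also have "\<dots> = E$$(k,k)" using k by simp
    finally show "(\<Sum>l<n. E$$(k,l) * (if l = k then 1 else 0)) = E$$(k,k)" .
  qed
  also have "\<dots> = mtrace E"
    unfolding mtrace_def using assms(2) by simp
  finally show ?thesis .
qed

lemma adj_move:
  fixes V T :: "complex mat"
  assumes "V \<in> carrier_mat n n" "T \<in> carrier_mat n n" "w \<in> carrier_vec n"
  shows "conjugate w \<bullet> ((V * T * mat_adjoint V) *\<^sub>v w) = conjugate (mat_adjoint V *\<^sub>v w) \<bullet> (T *\<^sub>v (mat_adjoint V *\<^sub>v w))"
proof -
  let ?u = "mat_adjoint V *\<^sub>v w"
  have u: "?u \<in> carrier_vec n" by (intro carrier_vecI) (use assms(1) in auto)
  have ui: "?u $ k = (\<Sum>i<n. cnj (V$$(i,k)) * w$i)" if "k < n" for k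
    using assms that by (simp add: scalar_prod_def atLeast0LessThan)
  have c: "V * T * mat_adjoint V \<in> carrier_mat n n" using assms by auto
  have "conjugate w \<bullet> ((V * T * mat_adjoint V) *\<^sub>v w)
      = (\<Sum>i<n. \<Sum>j<n. cnj (w$i) * (\<Sum>k<n. \<Sum>l<n. V$$(i,k) * T$$(k,l) * cnj (V$$(j,l))) * w$j)"
    unfolding quad_expand[OF c assms(3) assms(3)]
  proof (intro sum.cong refl)
    fix i j assume "i \<in> {..<n}" "j \<in> {..<n}"
    then show "cnj (w$i) * (V * T * mat_adjoint V) $$ (i,j) * w$j =
      cnj (w$i) * (\<Sum>k<n. \<Sum>l<n. V$$(i,k) * T$$(k,l) * cnj (V$$(j,l))) * w$j"
      using triple_index[OF assms(1,2), of i j] by simp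
  qed
  also have "\<dots> = (\<Sum>i<n. \<Sum>j<n. \<Sum>k<n. \<Sum>l<n. cnj (w$i) * V$$(i,k) * T$$(k,l) * cnj (V$$(j,l)) * w$j)"
    by (simp add: sum_distrib_left sum_distrib_right mult_ac)
  also have "\<dots> = (\<Sum>k<n. \<Sum>l<n. \<Sum>i<n. \<Sum>j<n. cnj (w$i) * V$$(i,k) * T$$(k,l) * cnj (V$$(j,l)) * w$j)"
  proof -
    have "(\<Sum>i<n. \<Sum>j<n. \<Sum>k<n. \<Sum>l<n. cnj (w$i) * V$$(i,k) * T$$(k,l) * cnj (V$$(j,l)) * w$j)
        = (\<Sum>i<n. \<Sum>k<n. \<Sum>j<n. \<Sum>l<n. cnj (w$i) * V$$(i,k) * T$$(k,l) * cnj (V$$(j,l)) * w$j)"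
      by (intro sum.cong refl sum.swap)
    also have "\<dots> = (\<Sum>k<n. \<Sum>i<n. \<Sum>j<n. \<Sum>l<n. cnj (w$i) * V$$(i,k) * T$$(k,l) * cnj (V$$(j,l)) * w$j)"
      by (rule sum.swap)
    also have "\<dots> = (\<Sum>k<n. \<Sum>i<n. \<Sum>l<n. \<Sum>j<n. cnj (w$i) * V$$(i,k) * T$$(k,l) * cnj (V$$(j,l)) * w$j)"
      by (intro sum.cong refl sum.swap)
    also have "\<dots> = (\<Sum>k<n. \<Sum>l<n. \<Sum>i<n. \<Sum>j<n. cnj (w$i) * V$$(i,k) * T$$(k,l) * cnj (V$$(j,l)) * w$j)"
      by (intro sum.cong refl sum.swap)
    finally show ?thesis .
  qed
  also have "\<dots> = (\<Sum>k<n. \<Sum>l<n. cnj (?u$k) * T$$(k,l) * ?u$l)"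
  proof (intro sum.cong refl)
    fix k l assume "k \<in> {..<n}" "l \<in> {..<n}"
    then have "k < n" "l < n" by auto
    then show "(\<Sum>i<n. \<Sum>j<n. cnj (w$i) * V$$(i,k) * T$$(k,l) * cnj (V$$(j,l)) * w$j) = cnj (?u$k) * T$$(k,l) * ?u$l"
      unfolding ui[OF \<open>k < n\<close>] ui[OF \<open>l < n\<close>]
      by (simp add: cnj_sum sum_distrib_left sum_distrib_right mult_ac)
  qed
  also have "\<dots> = conjugate ?u \<bullet> (T *\<^sub>v ?u)"
    unfolding quad_expand[OF assms(2) u u] ..
  finally show ?thesis .
qed

lemma continuous_map_cmult:
  fixes f g :: "'a \<Rightarrow> complex"
  shows "continuous_map X euclidean f \<Longrightarrow> continuous_map X euclidean g \<Longrightarrow> continuous_map X euclidean (\<lambda>x. f x * g x)"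
  by (simp add: continuous_map_atin tendsto_mult)

lemma continuous_map_cnj:
  fixes f :: "'a \<Rightarrow> complex"
  shows "continuous_map X euclidean f \<Longrightarrow> continuous_map X euclidean (\<lambda>x. cnj (f x))"
  by (simp add: continuous_map_atin tendsto_cnj)

locale setting =
  fixes G :: "('g, 'b) monoid_scheme" and T :: "'g topology" and \<mu> :: "'g measure"
    and UR UA :: "'g \<Rightarrow> complex mat" and d dA :: nat
  assumes cg: "compact_group G T"
    and haar: "normalized_haar G T \<mu>"
    and d1: "d \<ge> 1"
    and repR: "unitary_rep G T d UR"
    and repA: "unitary_rep G T dA UA"
begin

lemma prob: "prob_space \<mu>" using haar unfolding normalized_haar_def by auto
lemma space_mu: "space \<mu> = carrier G" using haar unfolding normalized_haar_def by auto
lemma topspace_T: "topspace T = carrier G" using cg unfolding compact_group_def by auto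
lemma sets_mu: "sets \<mu> = sigma_sets (topspace T) {U. openin T U}" using haar unfolding normalized_haar_def by auto
lemma compact_T: "compact_space T" using cg unfolding compact_group_def by auto

lemma cont_measurable:
  fixes f :: "'g \<Rightarrow> complex"
  assumes "continuous_map T euclidean f"
  shows "f \<in> borel_measurable \<mu>"
proof (rule borel_measurableI)
  fix S :: "complex set" assume "open S"
  have "f -` S \<inter> space \<mu> = {x \<in> topspace T. f x \<in> S}" using space_mu topspace_T by auto
  moreover have "openin T {x \<in> topspace T. f x \<in> S}"
    using openin_continuous_map_preimage[OF assms] \<open>open S\<close> by simp
  ultimately show "f -` S \<inter> space \<mu> \<in> sets \<mu>" unfolding sets_mu by (auto intro: sigma_sets.Basic)
qed

lemma cont_bounded:
  fixes f :: "'g \<Rightarrow> complex"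
  assumes "continuous_map T euclidean f"
  shows "\<exists>B. \<forall>x \<in> topspace T. norm (f x) \<le> B"
proof -
  have "compactin T (topspace T)" using compact_T unfolding compact_space_def .
  then have "compactin euclidean (f ` topspace T)" by (rule image_compactin[OF _ assms])
  then have "compact (f ` topspace T)" by simp
  then have "bounded (f ` topspace T)" by (rule compact_imp_bounded)
  then obtain B where "\<forall>y \<in> f ` topspace T. norm y \<le> B" unfolding bounded_iff by auto
  then show ?thesis by auto
qed

lemma cont_integrable:
  fixes f :: "'g \<Rightarrow> complex"
  assumes "continuous_map T euclidean f"
  shows "integrable \<mu> f"
proof -
  interpret prob_space \<mu> by (rule prob)
  obtain B where B: "\<forall>x \<in> topspace T. norm (f x) \<le> B" using cont_bounded[OF assms] by auto
  show ?thesis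
  proof (rule integrable_const_bound[where B = B])
    show "AE x in \<mu>. norm (f x) \<le> B" using B space_mu topspace_T by (intro AE_I2) auto
    show "f \<in> borel_measurable \<mu>" by (rule cont_measurable[OF assms])
  qed
qed

lemma UR_carrier: "g \<in> carrier G \<Longrightarrow> UR g \<in> carrier_mat d d"
  using repR unfolding unitary_rep_def unitary_mat_def by auto
lemma UA_carrier: "g \<in> carrier G \<Longrightarrow> UA g \<in> carrier_mat dA dA"
  using repA unfolding unitary_rep_def unitary_mat_def by auto
lemma UR_unitary: "g \<in> carrier G \<Longrightarrow> unitary_mat d (UR g)"
  using repR unfolding unitary_rep_def by auto
lemma UA_unitary: "g \<in> carrier G \<Longrightarrow> unitary_mat dA (UA g)"
  using repA unfolding unitary_rep_def by auto
lemma UR_cont: "i < d \<Longrightarrow> j < d \<Longrightarrow> continuous_map T euclidean (\<lambda>g. UR g $$ (i,j))"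
  using repR unfolding unitary_rep_def by auto
lemma UA_cont: "i < dA \<Longrightarrow> j < dA \<Longrightarrow> continuous_map T euclidean (\<lambda>g. UA g $$ (i,j))"
  using repA unfolding unitary_rep_def by auto

abbreviation "N \<equiv> d * dA"
definition K :: "'g \<Rightarrow> complex mat" where "K g = kron (UR g) (UA g)"

lemma K_carrier: "g \<in> carrier G \<Longrightarrow> K g \<in> carrier_mat N N"
  unfolding K_def using UR_carrier UA_carrier by auto

lemma K_cont: "i < N \<Longrightarrow> j < N \<Longrightarrow> continuous_map T euclidean (\<lambda>g. K g $$ (i,j))"
proof -
  assume i: "i < N" and j: "j < N"
  have "continuous_map T euclidean (\<lambda>g. UR g $$ (i div dA, j div dA) * UA g $$ (i mod dA, j mod dA))"
    using i j by (intro continuous_map_cmult UR_cont UA_cont) (auto simp: divmod_less)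
  then show ?thesis
  proof (rule continuous_map_eq)
    fix g assume "g \<in> topspace T"
    then have g: "g \<in> carrier G" using topspace_T by simp
    have "dim_row (UR g) = d" "dim_col (UR g) = d" "dim_row (UA g) = dA" "dim_col (UA g) = dA"
      using UR_carrier[OF g] UA_carrier[OF g] by auto
    then show "UR g $$ (i div dA, j div dA) * UA g $$ (i mod dA, j mod dA) = K g $$ (i,j)"
      unfolding K_def using i j by simp
  qed
qed

lemma sandwich_cont:
  fixes A :: "'g \<Rightarrow> complex mat"
  assumes Ac: "\<And>g. g \<in> carrier G \<Longrightarrow> A g \<in> carrier_mat n n"
    and Acont: "\<And>i j. i < n \<Longrightarrow> j < n \<Longrightarrow> continuous_map T euclidean (\<lambda>g. A g $$ (i,j))"
    and M: "M \<in> carrier_mat n n" and i: "i < n" and j: "j < n"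
  shows "continuous_map T euclidean (\<lambda>g. (A g * M * mat_adjoint (A g)) $$ (i,j))"
proof -
  have "continuous_map T euclidean (\<lambda>g. \<Sum>k<n. \<Sum>l<n. A g $$(i,k) * M$$(k,l) * cnj (A g $$(j,l)))"
    using i j by (intro continuous_map_sum continuous_map_cmult continuous_map_cnj Acont continuous_map_canonical_const) auto
  then show ?thesis
  proof (rule continuous_map_eq)
    fix g assume "g \<in> topspace T"
    then have "g \<in> carrier G" using topspace_T by simp
    then show "(\<Sum>k<n. \<Sum>l<n. A g $$(i,k) * M$$(k,l) * cnj (A g $$(j,l))) = (A g * M * mat_adjoint (A g)) $$ (i,j)"
      using triple_index[OF Ac M i j] by simp
  qed
qed

definition Cg :: "complex mat \<Rightarrow> 'g \<Rightarrow> complex mat" where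
  "Cg M g = kron (UR g) (UA g) * M * mat_adjoint (kron (UR g) (UA g))"

lemma Cg_K: "Cg M g = K g * M * mat_adjoint (K g)" unfolding Cg_def K_def ..

lemma Cg_carrier: "g \<in> carrier G \<Longrightarrow> M \<in> carrier_mat N N \<Longrightarrow> Cg M g \<in> carrier_mat N N"
proof -
  assume g: "g \<in> carrier G" and M: "M \<in> carrier_mat N N"
  have Kc: "K g \<in> carrier_mat N N" by (rule K_carrier[OF g])
  show ?thesis unfolding Cg_K
    by (rule mult_carrier_mat[OF mult_carrier_mat[OF Kc M] adj_carrier[OF Kc]])
qed

lemma Cg_cont: "M \<in> carrier_mat N N \<Longrightarrow> i < N \<Longrightarrow> j < N \<Longrightarrow> continuous_map T euclidean (\<lambda>g. Cg M g $$ (i,j))"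
  unfolding Cg_K by (rule sandwich_cont[OF K_carrier K_cont]) auto

lemma twirl_eq: "twirl \<mu> UR UA M = mat (dim_row M) (dim_col M) (\<lambda>(i,j). LINT g|\<mu>. Cg M g $$ (i,j))"
  unfolding twirl_def Cg_def ..

lemma twirl_carrier: "M \<in> carrier_mat N N \<Longrightarrow> twirl \<mu> UR UA M \<in> carrier_mat N N"
  unfolding twirl_eq by auto

lemma twirl_index: "M \<in> carrier_mat N N \<Longrightarrow> i < N \<Longrightarrow> j < N \<Longrightarrow> twirl \<mu> UR UA M $$ (i,j) = (LINT g|\<mu>. Cg M g $$ (i,j))"
  unfolding twirl_eq by auto

lemma quad_cont:
  assumes "M \<in> carrier_mat N N" "v \<in> carrier_vec N"
  shows "continuous_map T euclidean (\<lambda>g. conjugate v \<bullet> (Cg M g *\<^sub>v v))"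
proof -
  have "continuous_map T euclidean (\<lambda>g. \<Sum>i<N. \<Sum>j<N. cnj (v$i) * Cg M g $$(i,j) * v$j)"
    using assms by (intro continuous_map_sum continuous_map_cmult Cg_cont continuous_map_canonical_const) auto
  then show ?thesis
  proof (rule continuous_map_eq)
    fix g assume "g \<in> topspace T"
    then have "g \<in> carrier G" using topspace_T by simp
    then show "(\<Sum>i<N. \<Sum>j<N. cnj (v$i) * Cg M g $$(i,j) * v$j) = conjugate v \<bullet> (Cg M g *\<^sub>v v)"
      using quad_expand[OF Cg_carrier[OF _ assms(1)] assms(2) assms(2)] by simp
  qed
qed

lemma quad_twirl:
  assumes M: "M \<in> carrier_mat N N" and v: "v \<in> carrier_vec N"
  shows "conjugate v \<bullet> (twirl \<mu> UR UA M *\<^sub>v v) = (LINT g|\<mu>. conjugate v \<bullet> (Cg M g *\<^sub>v v))"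
proof -
  have int: "integrable \<mu> (\<lambda>g. Cg M g $$ (i,j))" if "i < N" "j < N" for i j
    by (rule cont_integrable[OF Cg_cont[OF M that]])
  have "conjugate v \<bullet> (twirl \<mu> UR UA M *\<^sub>v v) = (\<Sum>i<N. \<Sum>j<N. cnj (v$i) * (LINT g|\<mu>. Cg M g $$ (i,j)) * v$j)"
    unfolding quad_expand[OF twirl_carrier[OF M] v v]
    by (intro sum.cong refl) (simp add: twirl_index[OF M])
  also have "\<dots> = (\<Sum>i<N. \<Sum>j<N. LINT g|\<mu>. cnj (v$i) * Cg M g $$ (i,j) * v$j)"
    by simp
  also have "\<dots> = (\<Sum>i<N. LINT g|\<mu>. (\<Sum>j<N. cnj (v$i) * Cg M g $$ (i,j) * v$j))"
  proof (intro sum.cong refl)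
    fix i assume i: "i \<in> {..<N}"
    have "(LINT g|\<mu>. (\<Sum>j<N. cnj (v$i) * Cg M g $$ (i,j) * v$j)) = (\<Sum>j<N. LINT g|\<mu>. cnj (v$i) * Cg M g $$ (i,j) * v$j)"
      by (rule Bochner_Integration.integral_sum) (use i in \<open>auto intro!: integrable_mult_left integrable_mult_right int\<close>)
    then show "(\<Sum>j<N. LINT g|\<mu>. cnj (v$i) * Cg M g $$ (i,j) * v$j) = (LINT g|\<mu>. (\<Sum>j<N. cnj (v$i) * Cg M g $$ (i,j) * v$j))"
      by simp
  qed
  also have "\<dots> = (LINT g|\<mu>. (\<Sum>i<N. \<Sum>j<N. cnj (v$i) * Cg M g $$ (i,j) * v$j))"
    by (rule Bochner_Integration.integral_sum[symmetric]) (auto intro!: integrable_sum integrable_mult_left integrable_mult_right int)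
  also have "\<dots> = (LINT g|\<mu>. conjugate v \<bullet> (Cg M g *\<^sub>v v))"
  proof (rule Bochner_Integration.integral_cong[OF refl])
    fix g assume "g \<in> space \<mu>"
    then have "g \<in> carrier G" using space_mu by simp
    then show "(\<Sum>i<N. \<Sum>j<N. cnj (v$i) * Cg M g $$ (i,j) * v$j) = conjugate v \<bullet> (Cg M g *\<^sub>v v)"
      using quad_expand[OF Cg_carrier[OF _ M] v v] by simp
  qed
  finally show ?thesis .
qed

lemma twirl_lin:
  assumes A: "A \<in> carrier_mat N N" and B: "B \<in> carrier_mat N N"
  shows "twirl \<mu> UR UA (a \<cdot>\<^sub>m A + b \<cdot>\<^sub>m B) = a \<cdot>\<^sub>m twirl \<mu> UR UA A + b \<cdot>\<^sub>m twirl \<mu> UR UA B"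
proof -
  have AB: "a \<cdot>\<^sub>m A + b \<cdot>\<^sub>m B \<in> carrier_mat N N" using A B by auto
  show ?thesis
  proof (rule eq_matI)
    fix i j assume "i < dim_row (a \<cdot>\<^sub>m twirl \<mu> UR UA A + b \<cdot>\<^sub>m twirl \<mu> UR UA B)"
      "j < dim_col (a \<cdot>\<^sub>m twirl \<mu> UR UA A + b \<cdot>\<^sub>m twirl \<mu> UR UA B)"
    then have i: "i < N" and j: "j < N" using twirl_carrier[OF B] by auto
    have e: "Cg (a \<cdot>\<^sub>m A + b \<cdot>\<^sub>m B) g $$ (i,j) = a * Cg A g $$ (i,j) + b * Cg B g $$ (i,j)"
      if g: "g \<in> carrier G" for g
    proof -
      have Kc: "K g \<in> carrier_mat N N" by (rule K_carrier[OF g])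
      have "Cg (a \<cdot>\<^sub>m A + b \<cdot>\<^sub>m B) g $$ (i,j) = (\<Sum>k<N. \<Sum>l<N. K g $$(i,k) * (a \<cdot>\<^sub>m A + b \<cdot>\<^sub>m B)$$(k,l) * cnj (K g $$(j,l)))"
        unfolding Cg_K by (rule triple_index[OF Kc AB i j])
      also have "\<dots> = (\<Sum>k<N. \<Sum>l<N. a * (K g $$(i,k) * A$$(k,l) * cnj (K g $$(j,l))) + b * (K g $$(i,k) * B$$(k,l) * cnj (K g $$(j,l))))"
        using A B by (intro sum.cong refl) (simp add: algebra_simps)
      also have "\<dots> = a * (\<Sum>k<N. \<Sum>l<N. K g $$(i,k) * A$$(k,l) * cnj (K g $$(j,l))) + b * (\<Sum>k<N. \<Sum>l<N. K g $$(i,k) * B$$(k,l) * cnj (K g $$(j,l)))"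
        by (simp only: sum.distrib sum_distrib_left)
      also have "\<dots> = a * Cg A g $$ (i,j) + b * Cg B g $$ (i,j)"
        unfolding Cg_K triple_index[OF Kc A i j] triple_index[OF Kc B i j] ..
      finally show ?thesis .
    qed
    have "twirl \<mu> UR UA (a \<cdot>\<^sub>m A + b \<cdot>\<^sub>m B) $$ (i,j) = (LINT g|\<mu>. a * Cg A g $$ (i,j) + b * Cg B g $$ (i,j))"
      unfolding twirl_index[OF AB i j] using e space_mu by (intro Bochner_Integration.integral_cong) auto
    also have "\<dots> = a * (LINT g|\<mu>. Cg A g $$ (i,j)) + b * (LINT g|\<mu>. Cg B g $$ (i,j))"
      using cont_integrable[OF Cg_cont[OF A i j]] cont_integrable[OF Cg_cont[OF B i j]] by simp
    also have "\<dots> = (a \<cdot>\<^sub>m twirl \<mu> UR UA A + b \<cdot>\<^sub>m twirl \<mu> UR UA B) $$ (i,j)"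
      using twirl_index[OF A i j] twirl_index[OF B i j] twirl_carrier[OF A] twirl_carrier[OF B] i j by simp
    finally show "twirl \<mu> UR UA (a \<cdot>\<^sub>m A + b \<cdot>\<^sub>m B) $$ (i,j) = (a \<cdot>\<^sub>m twirl \<mu> UR UA A + b \<cdot>\<^sub>m twirl \<mu> UR UA B) $$ (i,j)" .
  qed (use A B twirl_carrier[OF A] twirl_carrier[OF B] twirl_carrier[OF AB] in auto)
qed

end

lemma cnj_mult_self: "cnj z * z = complex_of_real ((cmod z)\<^sup>2)"
  by (metis complex_norm_square mult.commute)

lemma bound_psd:
  fixes M :: "complex mat"
  assumes M: "M \<in> carrier_mat n n" and h: "\<And>v. v \<in> carrier_vec n \<Longrightarrow> Im (conjugate v \<bullet> (M *\<^sub>v v)) = 0"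
  shows "\<exists>c\<ge>0. psd (complex_of_real c \<cdot>\<^sub>m 1\<^sub>m n - M)"
proof -
  define c where "c = (\<Sum>i<n. \<Sum>j<n. cmod (M$$(i,j)))"
  have c0: "c \<ge> 0" unfolding c_def by (intro sum_nonneg) auto
  have "psd (complex_of_real c \<cdot>\<^sub>m 1\<^sub>m n - M)"
  proof (rule psdI[of _ n])
    show "complex_of_real c \<cdot>\<^sub>m 1\<^sub>m n - M \<in> carrier_mat n n" using M by auto
    fix v :: "complex vec" assume v: "v \<in> carrier_vec n"
    define S where "S = (\<Sum>k<n. (cmod (v$k))\<^sup>2)"
    have I: "complex_of_real c \<cdot>\<^sub>m 1\<^sub>m n \<in> carrier_mat n n" by auto
    have q1: "conjugate v \<bullet> ((complex_of_real c \<cdot>\<^sub>m 1\<^sub>m n) *\<^sub>v v) = complex_of_real (c * S)"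
    proof -
      have "conjugate v \<bullet> ((complex_of_real c \<cdot>\<^sub>m 1\<^sub>m n) *\<^sub>v v)
          = (\<Sum>i<n. \<Sum>j<n. (if j = i then complex_of_real c * (cnj (v$i) * v$i) else 0))"
        unfolding quad_expand[OF I v v] by (intro sum.cong refl) auto
      also have "\<dots> = (\<Sum>i<n. complex_of_real c * (cnj (v$i) * v$i))"
        by (intro sum.cong refl) simp
      also have "\<dots> = (\<Sum>i<n. complex_of_real (c * (cmod (v$i))\<^sup>2))"
        by (intro sum.cong refl) (simp only: cnj_mult_self of_real_mult)
      also have "\<dots> = complex_of_real (c * S)"
        unfolding S_def by (simp add: sum_distrib_left)
      finally show ?thesis .
    qed
    have vb: "cmod (v$i) * cmod (v$j) \<le> S" if "i < n" "j < n" for i j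
    proof -
      have "(cmod (v$i))\<^sup>2 \<le> S" unfolding S_def using that
        by (intro member_le_sum) auto
      moreover have "(cmod (v$j))\<^sup>2 \<le> S" unfolding S_def using that
        by (intro member_le_sum) auto
      moreover have "2 * (cmod (v$i) * cmod (v$j)) \<le> (cmod (v$i))\<^sup>2 + (cmod (v$j))\<^sup>2"
        using sum_squares_bound[of "cmod (v$i)" "cmod (v$j)"] by (simp add: power2_eq_square mult_ac)
      ultimately show ?thesis by linarith
    qed
    have "Re (conjugate v \<bullet> (M *\<^sub>v v)) \<le> cmod (conjugate v \<bullet> (M *\<^sub>v v))" by (rule complex_Re_le_cmod)
    also have "\<dots> = cmod (\<Sum>i<n. \<Sum>j<n. cnj (v$i) * M$$(i,j) * v$j)" unfolding quad_expand[OF M v v] ..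
    also have "\<dots> \<le> (\<Sum>i<n. \<Sum>j<n. cmod (M$$(i,j)) * (cmod (v$i) * cmod (v$j)))"
    proof -
      have "cmod (\<Sum>i<n. \<Sum>j<n. cnj (v$i) * M$$(i,j) * v$j) \<le> (\<Sum>i<n. cmod (\<Sum>j<n. cnj (v$i) * M$$(i,j) * v$j))"
        by (rule norm_sum)
      also have "\<dots> \<le> (\<Sum>i<n. \<Sum>j<n. cmod (cnj (v$i) * M$$(i,j) * v$j))"
        by (intro sum_mono norm_sum)
      also have "\<dots> = (\<Sum>i<n. \<Sum>j<n. cmod (M$$(i,j)) * (cmod (v$i) * cmod (v$j)))"
        by (simp add: norm_mult mult_ac)
      finally show ?thesis .
    qed
    also have "\<dots> \<le> (\<Sum>i<n. \<Sum>j<n. cmod (M$$(i,j)) * S)"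
      using vb by (intro sum_mono mult_left_mono) auto
    also have "\<dots> = c * S" unfolding c_def by (simp add: sum_distrib_right)
    finally have le: "Re (conjugate v \<bullet> (M *\<^sub>v v)) \<le> c * S" .
    show "Im (conjugate v \<bullet> ((complex_of_real c \<cdot>\<^sub>m 1\<^sub>m n - M) *\<^sub>v v)) = 0 \<and>
          Re (conjugate v \<bullet> ((complex_of_real c \<cdot>\<^sub>m 1\<^sub>m n - M) *\<^sub>v v)) \<ge> 0"
      unfolding quad_diff[OF I M v] q1 using h[OF v] le by simp
  qed
  with c0 show ?thesis by blast
qed


lemma sum_sel:
  fixes f :: "nat \<Rightarrow> complex"
  assumes "a < d" "\<And>p q. p < d \<Longrightarrow> q < e \<Longrightarrow> p \<noteq> a \<Longrightarrow> f (p*e+q) = 0"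
  shows "(\<Sum>i<d*e. f i) = (\<Sum>q<e. f (a*e+q))"
proof -
  have "(\<Sum>i<d*e. f i) = (\<Sum>p<d. \<Sum>q<e. f (p*e+q))" by (rule sum_divmod)
  also have "\<dots> = (\<Sum>q<e. f (a*e+q)) + (\<Sum>p\<in>{..<d}-{a}. \<Sum>q<e. f (p*e+q))"
    using assms(1) by (subst sum.remove[of _ a]) auto
  also have "(\<Sum>p\<in>{..<d}-{a}. \<Sum>q<e. f (p*e+q)) = 0"
    using assms(2) by (intro sum.neutral ballI sum.neutral) auto
  finally show ?thesis by simp
qed

locale setting2 = setting +
  fixes \<tau> :: "complex mat"
  assumes tau: "is_state dA \<tau>"
begin

lemma tau_carrier: "\<tau> \<in> carrier_mat dA dA" using tau unfolding is_state_def by auto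
lemma tau_psd: "psd \<tau>" using tau unfolding is_state_def by auto
lemma tau_tr: "mtrace \<tau> = 1" using tau unfolding is_state_def by auto
lemma tau_herm: "mat_adjoint \<tau> = \<tau>"
  by (rule psd_hermitian[OF tau_carrier]) (use psdD[OF tau_psd tau_carrier] in auto)
lemma dA1: "dA \<ge> 1"
proof (rule ccontr)
  assume "\<not> dA \<ge> 1" then have "dA = 0" by simp
  then have "mtrace \<tau> = 0" unfolding mtrace_def using tau_carrier by simp
  then show False using tau_tr by simp
qed

lemma Cg_kron:
  assumes g: "g \<in> carrier G" and E: "E \<in> carrier_mat d d"
  shows "Cg (kron E \<tau>) g = kron (UR g * E * mat_adjoint (UR g)) (UA g * \<tau> * mat_adjoint (UA g))"
proof -
  have U: "UR g \<in> carrier_mat d d" and V: "UA g \<in> carrier_mat dA dA"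
    using UR_carrier[OF g] UA_carrier[OF g] .
  have "Cg (kron E \<tau>) g = kron (UR g) (UA g) * kron E \<tau> * kron (mat_adjoint (UR g)) (mat_adjoint (UA g))"
    unfolding Cg_def kron_adj[OF U V] ..
  also have "\<dots> = kron (UR g * E) (UA g * \<tau>) * kron (mat_adjoint (UR g)) (mat_adjoint (UA g))"
    by (subst kron_mult[OF U V E tau_carrier]) rule
  also have "\<dots> = kron (UR g * E * mat_adjoint (UR g)) (UA g * \<tau> * mat_adjoint (UA g))"
    by (rule kron_mult) (use U V E tau_carrier in auto)
  finally show ?thesis .
qed

definition vv :: "complex vec \<Rightarrow> nat \<Rightarrow> complex vec" where
  "vv w a = vec N (\<lambda>i. if i div dA = a then w $ (i mod dA) else 0)"

definition qf :: "complex vec \<Rightarrow> complex mat \<Rightarrow> complex" where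
  "qf w M = (\<Sum>a<d. conjugate (vv w a) \<bullet> (M *\<^sub>v vv w a))"

lemma vv_carrier: "vv w a \<in> carrier_vec N" unfolding vv_def by simp

lemma quad_vv:
  assumes M: "M \<in> carrier_mat N N" and a: "a < d"
  shows "conjugate (vv w a) \<bullet> (M *\<^sub>v vv w a) = (\<Sum>q<dA. \<Sum>q'<dA. cnj (w$q) * M$$(a*dA+q, a*dA+q') * w$q')"
proof -
  have vi: "vv w a $ (p*dA+q) = (if p = a then w$q else 0)" if "p < d" "q < dA" for p q
    unfolding vv_def using that by (simp add: divmod_idx divmod_idx1)
  have "conjugate (vv w a) \<bullet> (M *\<^sub>v vv w a) = (\<Sum>i<N. \<Sum>j<N. cnj (vv w a $ i) * M$$(i,j) * vv w a $ j)"
    by (rule quad_expand[OF M vv_carrier vv_carrier])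
  also have "\<dots> = (\<Sum>q<dA. \<Sum>j<N. cnj (vv w a $ (a*dA+q)) * M$$(a*dA+q,j) * vv w a $ j)"
    by (rule sum_sel[OF a]) (simp add: vi)
  also have "\<dots> = (\<Sum>q<dA. \<Sum>q'<dA. cnj (vv w a $ (a*dA+q)) * M$$(a*dA+q,a*dA+q') * vv w a $ (a*dA+q'))"
    by (intro sum.cong refl sum_sel[OF a]) (simp add: vi)
  also have "\<dots> = (\<Sum>q<dA. \<Sum>q'<dA. cnj (w$q) * M$$(a*dA+q, a*dA+q') * w$q')"
    using a by (intro sum.cong refl) (simp add: vi)
  finally show ?thesis .
qed

lemma qf_psd: "psd M \<Longrightarrow> M \<in> carrier_mat N N \<Longrightarrow> Im (qf w M) = 0 \<and> Re (qf w M) \<ge> 0"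
  unfolding qf_def using psdD[OF _ _ vv_carrier] by (auto simp: Im_sum Re_sum intro!: sum_nonneg sum.neutral)

lemma qf_diff: "A \<in> carrier_mat N N \<Longrightarrow> B \<in> carrier_mat N N \<Longrightarrow> qf w (A - B) = qf w A - qf w B"
  unfolding qf_def by (simp add: quad_diff[OF _ _ vv_carrier] sum_subtractf)

lemma qf_kron:
  assumes A: "A \<in> carrier_mat d d" and B: "B \<in> carrier_mat dA dA" and w: "w \<in> carrier_vec dA"
  shows "qf w (kron A B) = mtrace A * (conjugate w \<bullet> (B *\<^sub>v w))"
proof -
  have KB: "kron A B \<in> carrier_mat N N" using A B by auto
  have "qf w (kron A B) = (\<Sum>a<d. \<Sum>q<dA. \<Sum>q'<dA. cnj (w$q) * kron A B $$(a*dA+q, a*dA+q') * w$q')"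
    unfolding qf_def by (intro sum.cong refl quad_vv[OF KB]) auto
  also have "\<dots> = (\<Sum>a<d. A$$(a,a) * (\<Sum>q<dA. \<Sum>q'<dA. cnj (w$q) * B$$(q,q') * w$q'))"
    using A B by (intro sum.cong refl) (simp add: divmod_idx divmod_idx1 sum_distrib_left mult_ac)
  also have "\<dots> = mtrace A * (conjugate w \<bullet> (B *\<^sub>v w))"
    unfolding quad_expand[OF B w w] mtrace_def using A by (simp add: sum_distrib_right)
  finally show ?thesis .
qed

lemma qf_twirl:
  assumes M: "M \<in> carrier_mat N N"
  shows "qf w (twirl \<mu> UR UA M) = (LINT g|\<mu>. qf w (Cg M g))"
proof -
  have "qf w (twirl \<mu> UR UA M) = (\<Sum>a<d. LINT g|\<mu>. conjugate (vv w a) \<bullet> (Cg M g *\<^sub>v vv w a))"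
    unfolding qf_def by (intro sum.cong refl quad_twirl[OF M vv_carrier])
  also have "\<dots> = (LINT g|\<mu>. (\<Sum>a<d. conjugate (vv w a) \<bullet> (Cg M g *\<^sub>v vv w a)))"
    by (rule Bochner_Integration.integral_sum[symmetric]) (intro cont_integrable quad_cont[OF M vv_carrier])
  finally show ?thesis unfolding qf_def .
qed

definition ptau where
  "ptau w g = conjugate w \<bullet> ((UA g * \<tau> * mat_adjoint (UA g)) *\<^sub>v w)"

lemma ptau_real:
  assumes g: "g \<in> carrier G" and w: "w \<in> carrier_vec dA"
  shows "Im (ptau w g) = 0 \<and> Re (ptau w g) \<ge> 0"
proof -
  have V: "UA g \<in> carrier_mat dA dA" by (rule UA_carrier[OF g])
  have u: "mat_adjoint (UA g) *\<^sub>v w \<in> carrier_vec dA" by (intro carrier_vecI) (use V in auto)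
  show ?thesis unfolding ptau_def adj_move[OF V tau_carrier w] by (rule psdD[OF tau_psd tau_carrier u])
qed

lemma qf_Cg_state:
  assumes g: "g \<in> carrier G" and E: "E \<in> carrier_mat d d" and trE: "mtrace E = 1" and w: "w \<in> carrier_vec dA"
  shows "qf w (Cg (kron E \<tau>) g) = ptau w g"
proof -
  have U: "UR g \<in> carrier_mat d d" and V: "UA g \<in> carrier_mat dA dA"
    using UR_carrier[OF g] UA_carrier[OF g] .
  have "qf w (Cg (kron E \<tau>) g) = mtrace (UR g * E * mat_adjoint (UR g)) * ptau w g"
    unfolding Cg_kron[OF g E] ptau_def by (rule qf_kron) (use U V E tau_carrier w in auto)
  also have "mtrace (UR g * E * mat_adjoint (UR g)) = 1"
    using trace_unitary[OF UR_unitary[OF g] E] trE by simp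
  finally show ?thesis by simp
qed

lemma qf_state:
  assumes E: "E \<in> carrier_mat d d" and trE: "mtrace E = 1" and w: "w \<in> carrier_vec dA"
  shows "qf w (twirl \<mu> UR UA (kron E \<tau>)) = complex_of_real (LINT g|\<mu>. Re (ptau w g))"
    and "(LINT g|\<mu>. Re (ptau w g)) \<ge> 0"
proof -
  have KE: "kron E \<tau> \<in> carrier_mat N N" using E tau_carrier by auto
  have "qf w (twirl \<mu> UR UA (kron E \<tau>)) = (LINT g|\<mu>. complex_of_real (Re (ptau w g)))"
    unfolding qf_twirl[OF KE]
  proof (rule Bochner_Integration.integral_cong[OF refl])
    fix g assume "g \<in> space \<mu>"
    then have g: "g \<in> carrier G" using space_mu by simp
    show "qf w (Cg (kron E \<tau>) g) = complex_of_real (Re (ptau w g))"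
      unfolding qf_Cg_state[OF g E trE w] using ptau_real[OF g w] by (simp add: complex_eq_iff)
  qed
  then show "qf w (twirl \<mu> UR UA (kron E \<tau>)) = complex_of_real (LINT g|\<mu>. Re (ptau w g))" by simp
  show "(LINT g|\<mu>. Re (ptau w g)) \<ge> 0"
    using ptau_real[OF _ w] space_mu by (intro Bochner_Integration.integral_nonneg) auto
qed

end

context setting2
begin

lemma eta_carrier: "eta d X x \<in> carrier_mat d d" unfolding eta_def by simp

definition E0 where "E0 = mat d d (\<lambda>(i,j). if i = j then 1 / of_nat d else (0::complex))"

lemma eta0: "eta d X (\<lambda>_. 0) = E0"
  unfolding E0_def eta_def by (intro eq_matI) auto

lemma E0_index: "i < d \<Longrightarrow> j < d \<Longrightarrow> E0 $$ (i,j) = (if i = j then 1 / of_nat d else 0)"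
  unfolding E0_def by simp

lemma E0_carrier: "E0 \<in> carrier_mat d d" unfolding E0_def by simp

lemma E0_tr: "mtrace E0 = 1"
proof -
  have "mtrace E0 = (\<Sum>i<d. 1 / of_nat d)" unfolding mtrace_def using E0_carrier
    by (intro sum.cong) (auto simp: E0_index)
  also have "\<dots> = 1" using d1 by simp
  finally show ?thesis .
qed

definition Y where "Y g = UA g * \<tau> * mat_adjoint (UA g)"

definition S where "S = mat dA dA (\<lambda>(b,b'). (LINT g|\<mu>. Y g $$ (b,b')) / of_nat d)"

lemma S_carrier: "S \<in> carrier_mat dA dA" unfolding S_def by simp

lemma Y_cont: "b < dA \<Longrightarrow> b' < dA \<Longrightarrow> continuous_map T euclidean (\<lambda>g. Y g $$ (b,b'))"
  unfolding Y_def by (rule sandwich_cont[OF UA_carrier UA_cont tau_carrier])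

lemma UE0U:
  assumes g: "g \<in> carrier G" and p: "p < d" and p': "p' < d"
  shows "(UR g * E0 * mat_adjoint (UR g)) $$ (p,p') = (if p = p' then 1 / of_nat d else 0)"
proof -
  have U: "UR g \<in> carrier_mat d d" by (rule UR_carrier[OF g])
  have "(UR g * E0 * mat_adjoint (UR g)) $$ (p,p') = (\<Sum>k<d. \<Sum>l<d. UR g $$ (p,k) * E0 $$ (k,l) * cnj (UR g $$ (p',l)))"
    by (rule triple_index[OF U E0_carrier p p'])
  also have "\<dots> = (\<Sum>k<d. UR g $$ (p,k) * (1 / of_nat d) * cnj (UR g $$ (p',k)))"
  proof (intro sum.cong refl)
    fix k assume k: "k \<in> {..<d}"
    have "(\<Sum>l<d. UR g $$ (p,k) * E0 $$ (k,l) * cnj (UR g $$ (p',l)))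
        = (\<Sum>l<d. if l = k then UR g $$ (p,k) * (1 / of_nat d) * cnj (UR g $$ (p',k)) else 0)"
      using k by (intro sum.cong refl) (auto simp: E0_index)
    also have "\<dots> = UR g $$ (p,k) * (1 / of_nat d) * cnj (UR g $$ (p',k))" using k by simp
    finally show "(\<Sum>l<d. UR g $$ (p,k) * E0 $$ (k,l) * cnj (UR g $$ (p',l))) = UR g $$ (p,k) * (1 / of_nat d) * cnj (UR g $$ (p',k))" .
  qed
  also have "\<dots> = (1 / of_nat d) * (\<Sum>k<d. UR g $$ (p,k) * cnj (UR g $$ (p',k)))"
    by (simp add: sum_distrib_left mult_ac)
  also have "\<dots> = (if p = p' then 1 / of_nat d else 0)"
    using unitary_rows[OF UR_unitary[OF g] p p'] by simp
  finally show ?thesis .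
qed

lemma Omega0: "twirl \<mu> UR UA (kron E0 \<tau>) = kron (1\<^sub>m d) S"
proof -
  have KE: "kron E0 \<tau> \<in> carrier_mat N N" using E0_carrier tau_carrier by auto
  show ?thesis
  proof (rule eq_matI)
    fix i j assume "i < dim_row (kron (1\<^sub>m d) S)" "j < dim_col (kron (1\<^sub>m d) S)"
    then have i: "i < N" and j: "j < N" using S_carrier by auto
    have id: "i div dA < d" "j div dA < d" "i mod dA < dA" "j mod dA < dA"
      using i j by (auto simp: divmod_less)
    have "twirl \<mu> UR UA (kron E0 \<tau>) $$ (i,j) = (LINT g|\<mu>. (if i div dA = j div dA then 1 / of_nat d else 0) * Y g $$ (i mod dA, j mod dA))"
      unfolding twirl_index[OF KE i j]
    proof (rule Bochner_Integration.integral_cong[OF refl])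
      fix g assume "g \<in> space \<mu>"
      then have g: "g \<in> carrier G" using space_mu by simp
      have U: "UR g * E0 * mat_adjoint (UR g) \<in> carrier_mat d d" using UR_carrier[OF g] E0_carrier by auto
      have V: "Y g \<in> carrier_mat dA dA" unfolding Y_def using UA_carrier[OF g] tau_carrier by auto
      show "Cg (kron E0 \<tau>) g $$ (i,j) = (if i div dA = j div dA then 1 / of_nat d else 0) * Y g $$ (i mod dA, j mod dA)"
        unfolding Cg_kron[OF g E0_carrier] Y_def[symmetric]
      proof -
        have "kron (UR g * E0 * mat_adjoint (UR g)) (Y g) $$ (i,j) = (UR g * E0 * mat_adjoint (UR g)) $$ (i div dA, j div dA) * Y g $$ (i mod dA, j mod dA)"
          using carrier_matD[OF U] carrier_matD[OF V] i j by (subst kron_index) auto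
        also have "\<dots> = (if i div dA = j div dA then 1 / of_nat d else 0) * Y g $$ (i mod dA, j mod dA)"
          using carrier_matD[OF U] by (simp only: UE0U[OF g id(1) id(2)])
        finally show "kron (UR g * E0 * mat_adjoint (UR g)) (Y g) $$ (i,j) = (if i div dA = j div dA then 1 / of_nat d else 0) * Y g $$ (i mod dA, j mod dA)" .
      qed
    qed
    also have "\<dots> = (if i div dA = j div dA then 1 / of_nat d else 0) * (LINT g|\<mu>. Y g $$ (i mod dA, j mod dA))"
      by simp
    also have "\<dots> = kron (1\<^sub>m d) S $$ (i,j)"
      using i j id S_carrier unfolding S_def by simp
    finally show "twirl \<mu> UR UA (kron E0 \<tau>) $$ (i,j) = kron (1\<^sub>m d) S $$ (i,j)" .
  qed (use twirl_carrier[OF KE] S_carrier in auto)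
qed

lemma S_psd: "psd S"
proof (rule psdI[OF S_carrier])
  fix w :: "complex vec" assume w: "w \<in> carrier_vec dA"
  have "of_nat d * (conjugate w \<bullet> (S *\<^sub>v w)) = qf w (kron (1\<^sub>m d) S)"
    using qf_kron[OF _ S_carrier w, of "1\<^sub>m d"] by (simp add: mtrace_def)
  also have "\<dots> = complex_of_real (LINT g|\<mu>. Re (ptau w g))"
    unfolding Omega0[symmetric] by (rule qf_state(1)[OF E0_carrier E0_tr w])
  finally have e: "conjugate w \<bullet> (S *\<^sub>v w) = complex_of_real ((LINT g|\<mu>. Re (ptau w g)) / real d)"
    using d1 by (simp add: field_simps)
  show "Im (conjugate w \<bullet> (S *\<^sub>v w)) = 0 \<and> Re (conjugate w \<bullet> (S *\<^sub>v w)) \<ge> 0"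
    unfolding e using qf_state(2)[OF E0_carrier E0_tr w] by simp
qed

lemma S_tr: "mtrace S = 1 / of_nat d"
proof -
  interpret prob_space \<mu> by (rule prob)
  have "mtrace S = (\<Sum>b<dA. (LINT g|\<mu>. Y g $$ (b,b)) / of_nat d)"
    unfolding mtrace_def using S_carrier by (intro sum.cong) (auto simp: S_def)
  also have "\<dots> = (LINT g|\<mu>. (\<Sum>b<dA. Y g $$ (b,b))) / of_nat d"
    by (subst Bochner_Integration.integral_sum) (auto intro!: cont_integrable Y_cont simp: sum_divide_distrib)
  also have "(LINT g|\<mu>. (\<Sum>b<dA. Y g $$ (b,b))) = (LINT g|\<mu>. 1)"
  proof (rule Bochner_Integration.integral_cong[OF refl])
    fix g assume "g \<in> space \<mu>"
    then have g: "g \<in> carrier G" using space_mu by simp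
    have "(\<Sum>b<dA. Y g $$ (b,b)) = mtrace (Y g)"
      unfolding mtrace_def Y_def using UA_carrier[OF g] by simp
    also have "\<dots> = 1" unfolding Y_def using trace_unitary[OF UA_unitary[OF g] tau_carrier] tau_tr by simp
    finally show "(\<Sum>b<dA. Y g $$ (b,b)) = 1" .
  qed
  also have "(LINT g|\<mu>. (1::complex)) = 1" using prob_space by simp
  finally show ?thesis by simp
qed

end

lemma quad_unit:
  fixes A :: "complex mat"
  assumes A: "A \<in> carrier_mat n n" and b: "b < n"
  shows "conjugate (vec n (\<lambda>k. if k = b then 1 else 0)) \<bullet> (A *\<^sub>v vec n (\<lambda>k. if k = b then 1 else 0)) = A $$ (b,b)"
  unfolding quad_vec[OF A] by (rule sesq_delta[OF b b])

lemma psd_one: "psd (1\<^sub>m n :: complex mat)"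
proof (rule psdI[of _ n])
  show "1\<^sub>m n \<in> carrier_mat n n" by simp
  fix v :: "complex vec" assume v: "v \<in> carrier_vec n"
  have "conjugate v \<bullet> (1\<^sub>m n *\<^sub>v v) = (\<Sum>i<n. \<Sum>j<n. if j = i then cnj (v$i) * v$i else 0)"
    unfolding quad_expand[OF one_carrier_mat v v] by (intro sum.cong refl) auto
  also have "\<dots> = (\<Sum>i<n. complex_of_real ((cmod (v$i))\<^sup>2))"
    by (intro sum.cong refl) (simp add: cnj_mult_self)
  also have "\<dots> = complex_of_real (\<Sum>i<n. (cmod (v$i))\<^sup>2)" by simp
  finally show "Im (conjugate v \<bullet> (1\<^sub>m n *\<^sub>v v)) = 0 \<and> Re (conjugate v \<bullet> (1\<^sub>m n *\<^sub>v v)) \<ge> 0"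
    by (simp add: sum_nonneg)
qed

lemma psd_zero_diff: "A \<in> carrier_mat n n \<Longrightarrow> psd (A - A :: complex mat)"
proof -
  assume A: "A \<in> carrier_mat n n"
  show ?thesis
  proof (rule psdI[of _ n])
    show "A - A \<in> carrier_mat n n" using A by simp
    fix v :: "complex vec" assume v: "v \<in> carrier_vec n"
    have "conjugate v \<bullet> ((A - A) *\<^sub>v v) = 0" by (simp only: quad_diff[OF A A v]) simp
    then show "Im (conjugate v \<bullet> ((A - A) *\<^sub>v v)) = 0 \<and> Re (conjugate v \<bullet> ((A - A) *\<^sub>v v)) \<ge> 0" by simp
  qed
qed

lemma inf_affine:
  fixes A :: "real set"
  assumes ne: "A \<noteq> {}" and bd: "\<And>t. t \<in> A \<Longrightarrow> t \<ge> m" and b: "b > 0"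
  shows "Inf ((\<lambda>t. a + b * t) ` A) = a + b * Inf A"
proof -
  have bA: "bdd_below A" using bd by (intro bdd_belowI[of _ m]) auto
  have bI: "bdd_below ((\<lambda>t. a + b * t) ` A)"
    using bd b by (intro bdd_belowI[of _ "a + b * m"]) auto
  have "a + b * Inf A \<le> Inf ((\<lambda>t. a + b * t) ` A)"
  proof (rule cInf_greatest)
    show "(\<lambda>t. a + b * t) ` A \<noteq> {}" using ne by simp
    fix y assume "y \<in> (\<lambda>t. a + b * t) ` A"
    then obtain t where t: "t \<in> A" "y = a + b * t" by auto
    have "Inf A \<le> t" by (rule cInf_lower[OF t(1) bA])
    then show "a + b * Inf A \<le> y" using t b by simp
  qed
  moreover have "Inf ((\<lambda>t. a + b * t) ` A) \<le> a + b * Inf A"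
  proof -
    have "(Inf ((\<lambda>t. a + b * t) ` A) - a) / b \<le> Inf A"
    proof (rule cInf_greatest[OF ne])
      fix t assume t: "t \<in> A"
      have "Inf ((\<lambda>t. a + b * t) ` A) \<le> a + b * t" by (rule cInf_lower[OF _ bI]) (use t in auto)
      then show "(Inf ((\<lambda>t. a + b * t) ` A) - a) / b \<le> t" using b by (simp add: field_simps)
    qed
    then show ?thesis using b by (simp add: field_simps)
  qed
  ultimately show ?thesis by simp
qed

lemma kron_smult_right: "kron A (c \<cdot>\<^sub>m B) = c \<cdot>\<^sub>m kron A B"
  by (rule eq_matI) (auto simp: divmod_less)

lemma kron_lin_left:
  assumes "A \<in> carrier_mat n n" "B \<in> carrier_mat n n"
  shows "kron (a \<cdot>\<^sub>m A + b \<cdot>\<^sub>m B) C = a \<cdot>\<^sub>m kron A C + b \<cdot>\<^sub>m kron B C"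
  by (rule eq_matI) (use assms in \<open>auto simp: divmod_less algebra_simps\<close>)

lemma helper1: "(a::complex) * s + b * z - (a * s + b * qq) = b * (z - qq)"
  by (simp add: algebra_simps)

lemma helper2:
  fixes l :: real and z s qq :: complex
  assumes "0 < l"
  shows "complex_of_real (1/l) * z + complex_of_real (-(1-l)/l) * s - qq
       = complex_of_real (1/l) * (z - (complex_of_real (1-l) * s + complex_of_real l * qq))"
proof -
  have "complex_of_real l \<noteq> 0" using assms by simp
  then show ?thesis by (simp add: field_simps)
qed

context setting2
begin

definition Fset :: "complex mat \<Rightarrow> real set" where
  "Fset Om = {Re (mtrace Z) | Z. Z \<in> carrier_mat dA dA \<and> psd Z \<and> loewner_le Om (kron (1\<^sub>m d) Z)}"

definition good :: "complex mat \<Rightarrow> bool" where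
  "good E \<longleftrightarrow> E \<in> carrier_mat d d \<and> mat_adjoint E = E \<and> mtrace E = 1"

abbreviation "Om E \<equiv> twirl \<mu> UR UA (kron E \<tau>)"

lemma E0_good: "good E0"
proof -
  have "mat_adjoint E0 = E0" using E0_carrier by (intro eq_matI) (auto simp: E0_index)
  then show ?thesis unfolding good_def using E0_carrier E0_tr by auto
qed

lemma Om_carrier: "E \<in> carrier_mat d d \<Longrightarrow> Om E \<in> carrier_mat N N"
  using tau_carrier by (intro twirl_carrier) auto

lemma Om_herm:
  assumes E: "good E" and v: "v \<in> carrier_vec N"
  shows "Im (conjugate v \<bullet> (Om E *\<^sub>v v)) = 0"
proof -
  have Ec: "E \<in> carrier_mat d d" and Eh: "mat_adjoint E = E" using E unfolding good_def by auto
  have KE: "kron E \<tau> \<in> carrier_mat N N" using Ec tau_carrier by auto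
  have KEh: "mat_adjoint (kron E \<tau>) = kron E \<tau>" using kron_adj[OF Ec tau_carrier] Eh tau_herm by simp
  have "conjugate v \<bullet> (Om E *\<^sub>v v) = (LINT g|\<mu>. complex_of_real (Re (conjugate v \<bullet> (Cg (kron E \<tau>) g *\<^sub>v v))))"
    unfolding quad_twirl[OF KE v]
  proof (rule Bochner_Integration.integral_cong[OF refl])
    fix g assume "g \<in> space \<mu>"
    then have g: "g \<in> carrier G" using space_mu by simp
    have Kc: "K g \<in> carrier_mat N N" by (rule K_carrier[OF g])
    have u: "mat_adjoint (K g) *\<^sub>v v \<in> carrier_vec N" by (intro carrier_vecI) (use Kc in auto)
    have "Im (conjugate v \<bullet> (Cg (kron E \<tau>) g *\<^sub>v v)) = 0"
      unfolding Cg_K adj_move[OF Kc KE v] by (rule herm_quad_real[OF KE KEh u])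
    then show "conjugate v \<bullet> (Cg (kron E \<tau>) g *\<^sub>v v) = complex_of_real (Re (conjugate v \<bullet> (Cg (kron E \<tau>) g *\<^sub>v v)))"
      by (simp add: complex_eq_iff)
  qed
  then show ?thesis by simp
qed

lemma Fset_nonempty:
  assumes E: "good E"
  shows "Fset (Om E) \<noteq> {}"
proof -
  have Ec: "E \<in> carrier_mat d d" using E unfolding good_def by auto
  obtain c where c: "c \<ge> 0" and pc: "psd (complex_of_real c \<cdot>\<^sub>m 1\<^sub>m N - Om E)"
    using bound_psd[OF Om_carrier[OF Ec] Om_herm[OF E]] by auto
  define Z where "Z = complex_of_real c \<cdot>\<^sub>m 1\<^sub>m dA"
  have Zc: "Z \<in> carrier_mat dA dA" unfolding Z_def by simp
  have Zp: "psd Z" unfolding Z_def by (rule psd_smult[OF one_carrier_mat psd_one c])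
  have kz: "kron (1\<^sub>m d) Z = complex_of_real c \<cdot>\<^sub>m 1\<^sub>m N"
    unfolding Z_def kron_smult_right kron_one ..
  have "loewner_le (Om E) (kron (1\<^sub>m d) Z)"
    unfolding loewner_le_def kz using pc Om_carrier[OF Ec] by auto
  then have "Re (mtrace Z) \<in> Fset (Om E)" unfolding Fset_def using Zc Zp by auto
  then show ?thesis by auto
qed

lemma qf_Om_eq:
  assumes E: "good E" and w: "w \<in> carrier_vec dA"
  shows "qf w (Om E) = of_nat d * (conjugate w \<bullet> (S *\<^sub>v w))"
proof -
  have Ec: "E \<in> carrier_mat d d" and Et: "mtrace E = 1" using E unfolding good_def by auto
  have "qf w (Om E) = qf w (Om E0)"
    using qf_state(1)[OF Ec Et w] qf_state(1)[OF E0_carrier E0_tr w] by simp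
  also have "\<dots> = qf w (kron (1\<^sub>m d) S)" unfolding Omega0 ..
  also have "\<dots> = of_nat d * (conjugate w \<bullet> (S *\<^sub>v w))"
    using qf_kron[OF one_carrier_mat S_carrier w] by (simp add: mtrace_def)
  finally show ?thesis .
qed

lemma qf_kron1:
  assumes Z: "Z \<in> carrier_mat dA dA" and w: "w \<in> carrier_vec dA"
  shows "qf w (kron (1\<^sub>m d) Z) = of_nat d * (conjugate w \<bullet> (Z *\<^sub>v w))"
  using qf_kron[OF one_carrier_mat Z w] by (simp add: mtrace_def)

lemma feasible_quad:
  assumes E: "good E" and Z: "Z \<in> carrier_mat dA dA" and le: "loewner_le (Om E) (kron (1\<^sub>m d) Z)"
    and w: "w \<in> carrier_vec dA"
  shows "Im (conjugate w \<bullet> (Z *\<^sub>v w)) = Im (conjugate w \<bullet> (S *\<^sub>v w))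
       \<and> Re (conjugate w \<bullet> (Z *\<^sub>v w)) \<ge> Re (conjugate w \<bullet> (S *\<^sub>v w))"
proof -
  have Ec: "E \<in> carrier_mat d d" using E unfolding good_def by auto
  have KZ: "kron (1\<^sub>m d) Z \<in> carrier_mat N N" using Z by auto
  have p: "psd (kron (1\<^sub>m d) Z - Om E)" using le unfolding loewner_le_def by auto
  have D: "kron (1\<^sub>m d) Z - Om E \<in> carrier_mat N N" using KZ Om_carrier[OF Ec] by auto
  have "qf w (kron (1\<^sub>m d) Z - Om E) = of_nat d * (conjugate w \<bullet> (Z *\<^sub>v w)) - of_nat d * (conjugate w \<bullet> (S *\<^sub>v w))"
    unfolding qf_diff[OF KZ Om_carrier[OF Ec]] qf_kron1[OF Z w] qf_Om_eq[OF E w] ..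
  then have "Im (of_nat d * (conjugate w \<bullet> (Z *\<^sub>v w)) - of_nat d * (conjugate w \<bullet> (S *\<^sub>v w))) = 0
     \<and> Re (of_nat d * (conjugate w \<bullet> (Z *\<^sub>v w)) - of_nat d * (conjugate w \<bullet> (S *\<^sub>v w))) \<ge> 0"
    using qf_psd[OF p D, of w] by simp
  then show ?thesis using d1 by auto
qed

lemma Fset_lower:
  assumes E: "good E" and t: "t \<in> Fset (Om E)"
  shows "t \<ge> 1 / real d"
proof -
  obtain Z where Z: "Z \<in> carrier_mat dA dA" and le: "loewner_le (Om E) (kron (1\<^sub>m d) Z)" and tZ: "t = Re (mtrace Z)"
    using t unfolding Fset_def by auto
  have b: "Re (Z $$ (b,b)) \<ge> Re (S $$ (b,b))" if "b < dA" for b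
    using feasible_quad[OF E Z le, of "vec dA (\<lambda>k. if k = b then 1 else 0)"]
      quad_unit[OF Z that] quad_unit[OF S_carrier that] by simp
  have "(\<Sum>x<dA. Re (S$$(x,x))) \<le> (\<Sum>x<dA. Re (Z$$(x,x)))" using b by (intro sum_mono) auto
  then have "Re (mtrace S) \<le> Re (mtrace Z)"
    unfolding mtrace_def using Z S_carrier by (simp add: Re_sum)
  then show ?thesis using tZ S_tr by simp
qed

lemma Fset_S: "Re (mtrace S) \<in> Fset (Om E0)"
proof -
  have "loewner_le (Om E0) (kron (1\<^sub>m d) S)"
    unfolding loewner_le_def Omega0 using psd_zero_diff[of "kron (1\<^sub>m d) S" N] S_carrier by auto
  then show ?thesis unfolding Fset_def using S_carrier S_psd by auto
qed

definition V where "V E = Inf (Fset (Om E))"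

lemma V_ge: "good E \<Longrightarrow> V E \<ge> 1 / real d"
  unfolding V_def by (intro cInf_greatest Fset_nonempty) (auto intro: Fset_lower)

lemma V_E0: "V E0 = 1 / real d"
proof -
  have "V E0 \<le> Re (mtrace S)" unfolding V_def
    by (rule cInf_lower[OF Fset_S]) (auto intro!: bdd_belowI Fset_lower[OF E0_good])
  then show ?thesis using V_ge[OF E0_good] S_tr by simp
qed

lemma V_Hmin: "good E \<Longrightarrow> 2 powr (- Hmin d dA (Om E)) = V E"
proof -
  assume E: "good E"
  have "1 / real d > 0" using d1 by simp
  then have pos: "V E > 0" using V_ge[OF E] by linarith
  have "Hmin d dA (Om E) = - log 2 (V E)" unfolding Hmin_def V_def Fset_def ..
  then show ?thesis using pos by simp
qed

lemma mix:
  assumes E: "good E" and l0: "0 < l" and l1: "l \<le> 1"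
    and Em: "Om' = complex_of_real (1 - l) \<cdot>\<^sub>m Om E0 + complex_of_real l \<cdot>\<^sub>m Om E"
  shows "Fset Om' = (\<lambda>t. (1 - l) / real d + l * t) ` Fset (Om E)"
proof
  have Ec: "E \<in> carrier_mat d d" using E unfolding good_def by auto
  have O0: "Om E0 \<in> carrier_mat N N" by (rule Om_carrier[OF E0_carrier])
  have O1: "Om E \<in> carrier_mat N N" by (rule Om_carrier[OF Ec])
  have Omc: "Om' \<in> carrier_mat N N" unfolding Em using O0 O1 by auto
  show "(\<lambda>t. (1 - l) / real d + l * t) ` Fset (Om E) \<subseteq> Fset Om'"
  proof
    fix y assume "y \<in> (\<lambda>t. (1 - l) / real d + l * t) ` Fset (Om E)"
    then obtain Z where Z: "Z \<in> carrier_mat dA dA" and Zp: "psd Z" and le: "loewner_le (Om E) (kron (1\<^sub>m d) Z)"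
      and y: "y = (1 - l) / real d + l * Re (mtrace Z)"
      unfolding Fset_def by auto
    define Z' where "Z' = complex_of_real (1 - l) \<cdot>\<^sub>m S + complex_of_real l \<cdot>\<^sub>m Z"
    have Z'c: "Z' \<in> carrier_mat dA dA" unfolding Z'_def using Z S_carrier by auto
    have Z'p: "psd Z'" unfolding Z'_def by (rule psd_comb[OF S_carrier Z S_psd Zp]) (use l1 l0 in auto)
    have eq: "kron (1\<^sub>m d) Z' - Om' = complex_of_real l \<cdot>\<^sub>m (kron (1\<^sub>m d) Z - Om E)"
    proof (rule eq_matI)
      fix i j assume ij: "i < dim_row (complex_of_real l \<cdot>\<^sub>m (kron (1\<^sub>m d) Z - Om E))"
        "j < dim_col (complex_of_real l \<cdot>\<^sub>m (kron (1\<^sub>m d) Z - Om E))"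
      then have i: "i < N" and j: "j < N" using O1 by auto
      have e0: "Om E0 $$ (i,j) = kron (1\<^sub>m d) S $$ (i,j)" unfolding Omega0 ..
      have k1: "kron (1\<^sub>m d) Z' $$ (i,j) = complex_of_real (1-l) * kron (1\<^sub>m d) S $$ (i,j) + complex_of_real l * kron (1\<^sub>m d) Z $$ (i,j)"
        unfolding Z'_def using i j Z S_carrier by (simp add: divmod_less)
      have o1: "Om' $$ (i,j) = complex_of_real (1-l) * Om E0 $$ (i,j) + complex_of_real l * Om E $$ (i,j)"
        unfolding Em using i j O0 O1 by simp
      have m: "(kron (1\<^sub>m d) Z' - Om') $$ (i,j) = kron (1\<^sub>m d) Z' $$ (i,j) - Om' $$ (i,j)"
        using i j Omc by (intro index_minus_mat(1)) auto
      have r0: "(kron (1\<^sub>m d) Z - Om E) $$ (i,j) = kron (1\<^sub>m d) Z $$ (i,j) - Om E $$ (i,j)"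
        using i j O1 by (intro index_minus_mat(1)) auto
      have r: "(complex_of_real l \<cdot>\<^sub>m (kron (1\<^sub>m d) Z - Om E)) $$ (i,j) = complex_of_real l * ((kron (1\<^sub>m d) Z - Om E) $$ (i,j))"
        using i j O1 by (intro index_smult_mat(1)) auto
      show "(kron (1\<^sub>m d) Z' - Om') $$ (i,j) = (complex_of_real l \<cdot>\<^sub>m (kron (1\<^sub>m d) Z - Om E)) $$ (i,j)"
        by (simp only: m r r0 k1 o1 e0 helper1)
    qed (use O1 Omc Z'c in auto)
    have "psd (kron (1\<^sub>m d) Z' - Om')"
      unfolding eq by (rule psd_smult) (use le O1 Z l0 loewner_le_def in auto)
    then have "loewner_le Om' (kron (1\<^sub>m d) Z')" unfolding loewner_le_def using Omc Z'c by auto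
    moreover have "Re (mtrace Z') = y"
      unfolding Z'_def y mtrace_lin[OF S_carrier Z] using S_tr by simp
    ultimately show "y \<in> Fset Om'" unfolding Fset_def using Z'c Z'p by auto
  qed
  show "Fset Om' \<subseteq> (\<lambda>t. (1 - l) / real d + l * t) ` Fset (Om E)"
  proof
    fix y assume "y \<in> Fset Om'"
    then obtain Z' where Z': "Z' \<in> carrier_mat dA dA" and le: "loewner_le Om' (kron (1\<^sub>m d) Z')"
      and y: "y = Re (mtrace Z')"
      unfolding Fset_def by auto
    define Z where "Z = complex_of_real (1 / l) \<cdot>\<^sub>m Z' + complex_of_real (- (1 - l) / l) \<cdot>\<^sub>m S"
    have Zc: "Z \<in> carrier_mat dA dA" unfolding Z_def using Z' S_carrier by auto
    have eq: "kron (1\<^sub>m d) Z - Om E = complex_of_real (1 / l) \<cdot>\<^sub>m (kron (1\<^sub>m d) Z' - Om')"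
    proof (rule eq_matI)
      fix i j assume ij: "i < dim_row (complex_of_real (1 / l) \<cdot>\<^sub>m (kron (1\<^sub>m d) Z' - Om'))"
        "j < dim_col (complex_of_real (1 / l) \<cdot>\<^sub>m (kron (1\<^sub>m d) Z' - Om'))"
      then have i: "i < N" and j: "j < N" using Omc by auto
      have e0: "Om E0 $$ (i,j) = kron (1\<^sub>m d) S $$ (i,j)" unfolding Omega0 ..
      have kZ: "kron (1\<^sub>m d) Z $$ (i,j) = complex_of_real (1/l) * kron (1\<^sub>m d) Z' $$ (i,j) + complex_of_real (-(1-l)/l) * kron (1\<^sub>m d) S $$ (i,j)"
        unfolding Z_def using i j Z' S_carrier by (simp add: divmod_less)
      have o1: "Om' $$ (i,j) = complex_of_real (1-l) * Om E0 $$ (i,j) + complex_of_real l * Om E $$ (i,j)"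
        unfolding Em using i j O0 O1 by simp
      have m: "(kron (1\<^sub>m d) Z - Om E) $$ (i,j) = kron (1\<^sub>m d) Z $$ (i,j) - Om E $$ (i,j)"
        using i j O1 by (intro index_minus_mat(1)) auto
      have r0: "(kron (1\<^sub>m d) Z' - Om') $$ (i,j) = kron (1\<^sub>m d) Z' $$ (i,j) - Om' $$ (i,j)"
        using i j Omc by (intro index_minus_mat(1)) auto
      have r: "(complex_of_real (1/l) \<cdot>\<^sub>m (kron (1\<^sub>m d) Z' - Om')) $$ (i,j) = complex_of_real (1/l) * ((kron (1\<^sub>m d) Z' - Om') $$ (i,j))"
        using i j Omc by (intro index_smult_mat(1)) auto
      show "(kron (1\<^sub>m d) Z - Om E) $$ (i,j) = (complex_of_real (1 / l) \<cdot>\<^sub>m (kron (1\<^sub>m d) Z' - Om')) $$ (i,j)"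
        by (simp only: m r r0 kZ o1 e0 helper2[OF l0])
    qed (use O1 Omc Zc in auto)
    have pd: "psd (kron (1\<^sub>m d) Z - Om E)"
      unfolding eq by (rule psd_smult) (use le Omc Z' l0 loewner_le_def in auto)
    then have leZ: "loewner_le (Om E) (kron (1\<^sub>m d) Z)" unfolding loewner_le_def using O1 Zc by auto
    have Zp: "psd Z"
    proof (rule psdI[OF Zc])
      fix w :: "complex vec" assume w: "w \<in> carrier_vec dA"
      have "Im (conjugate w \<bullet> (Z *\<^sub>v w)) = Im (conjugate w \<bullet> (S *\<^sub>v w))
          \<and> Re (conjugate w \<bullet> (Z *\<^sub>v w)) \<ge> Re (conjugate w \<bullet> (S *\<^sub>v w))"
        by (rule feasible_quad[OF E Zc leZ w])
      then show "Im (conjugate w \<bullet> (Z *\<^sub>v w)) = 0 \<and> Re (conjugate w \<bullet> (Z *\<^sub>v w)) \<ge> 0"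
        using psdD[OF S_psd S_carrier w] by auto
    qed
    have "Re (mtrace Z) = (1 / l) * y - (1 - l) / l * (1 / real d)"
      unfolding Z_def y mtrace_lin[OF Z' S_carrier] using S_tr by (simp add: minus_divide_left)
    then have "l * Re (mtrace Z) = l * ((1 / l) * y) - l * ((1 - l) / l * (1 / real d))"
      by (simp add: right_diff_distrib)
    also have "l * ((1 / l) * y) = y" using l0 by simp
    also have "l * ((1 - l) / l * (1 / real d)) = (1 - l) / real d" using l0 by simp
    finally have "y = (1 - l) / real d + l * Re (mtrace Z)" by simp
    moreover have "Re (mtrace Z) \<in> Fset (Om E)" unfolding Fset_def using Zc Zp leZ by auto
    ultimately show "y \<in> (\<lambda>t. (1 - l) / real d + l * t) ` Fset (Om E)" by auto
  qed
qed

lemma V_mix: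
  assumes E: "good E" and l0: "0 < l" and l1: "l \<le> 1"
    and Em: "Om E' = complex_of_real (1 - l) \<cdot>\<^sub>m Om E0 + complex_of_real l \<cdot>\<^sub>m Om E"
  shows "V E' = (1 - l) / real d + l * V E"
proof -
  have "V E' = Inf ((\<lambda>t. (1 - l) / real d + l * t) ` Fset (Om E))"
    unfolding V_def mix[OF E l0 l1 Em] ..
  also have "\<dots> = (1 - l) / real d + l * V E"
    unfolding V_def by (rule inf_affine[OF Fset_nonempty[OF E] Fset_lower[OF E] l0])
  finally show ?thesis .
qed

end

theorem lemma3:
  fixes G :: "('g, 'b) monoid_scheme" and T :: "'g topology" and \<mu> :: "'g measure"
    and UR UA :: "'g \<Rightarrow> complex mat" and d dA :: nat
    and X :: "nat \<Rightarrow> complex mat" and \<tau> :: "complex mat"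
  assumes "compact_group G T"
    and "normalized_haar G T \<mu>"
    and "d \<ge> 1"
    and "unitary_rep G T d UR"
    and "unitary_rep G T dA UA"
    and "gen_basis d X"
    and "is_state dA \<tau>"
  shows "(\<forall>l :: real. \<forall>x. l \<ge> 0 \<longrightarrow> x \<in> state_coeffs d X \<longrightarrow> (\<lambda>k. l * x k) \<in> state_coeffs d X \<longrightarrow>
            Phi_tilde \<mu> UR UA d dA X \<tau> (\<lambda>k. l * x k) = l * Phi_tilde \<mu> UR UA d dA X \<tau> x)
       \<and> (\<forall>x \<in> state_coeffs d X. Phi_tilde \<mu> UR UA d dA X \<tau> x \<ge> 0)"
proof -
  interpret setting2 G T \<mu> UR UA d dA \<tau>
    by unfold_locales (use assms in auto)
  have good_eta: "good (eta d X x)" if "x \<in> state_coeffs d X" for x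
  proof -
    have st: "is_state d (eta d X x)" using that unfolding state_coeffs_def by simp
    then have c: "eta d X x \<in> carrier_mat d d" and p: "psd (eta d X x)" and t: "mtrace (eta d X x) = 1"
      unfolding is_state_def by auto
    have "mat_adjoint (eta d X x) = eta d X x"
      by (rule psd_hermitian[OF c]) (use psdD[OF p c] in auto)
    then show ?thesis unfolding good_def using c t by auto
  qed
  have PhiV: "Phi \<mu> UR UA d dA X \<tau> x = V (eta d X x)" if "x \<in> state_coeffs d X" for x
    unfolding Phi_def by (rule V_Hmin[OF good_eta[OF that]])
  have Phi0: "Phi \<mu> UR UA d dA X \<tau> (\<lambda>_. 0) = 1 / real d"
    unfolding Phi_def eta0 V_Hmin[OF E0_good] V_E0 ..
  have eta_lin: "eta d X (\<lambda>k. l * x k) = complex_of_real (1 - l) \<cdot>\<^sub>m E0 + complex_of_real l \<cdot>\<^sub>m eta d X x" for l x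
  proof (rule eq_matI)
    fix i j assume "i < dim_row (complex_of_real (1 - l) \<cdot>\<^sub>m E0 + complex_of_real l \<cdot>\<^sub>m eta d X x)"
      "j < dim_col (complex_of_real (1 - l) \<cdot>\<^sub>m E0 + complex_of_real l \<cdot>\<^sub>m eta d X x)"
    then have i: "i < d" and j: "j < d" using carrier_matD[OF eta_carrier[of X x]] by auto
    have s: "(\<Sum>k<d\<^sup>2 - 1. complex_of_real (l * x k) * X k $$ (i, j)) = complex_of_real l * (\<Sum>k<d\<^sup>2 - 1. complex_of_real (x k) * X k $$ (i, j))"
      by (simp add: sum_distrib_left mult_ac)
    show "eta d X (\<lambda>k. l * x k) $$ (i,j) = (complex_of_real (1 - l) \<cdot>\<^sub>m E0 + complex_of_real l \<cdot>\<^sub>m eta d X x) $$ (i,j)"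
      using i j eta_carrier E0_carrier unfolding eta_def by (simp add: E0_index algebra_simps sum_distrib_left)
  qed (simp_all add: eta_def)
  have Om_lin: "Om (eta d X (\<lambda>k. l * x k)) = complex_of_real (1 - l) \<cdot>\<^sub>m Om E0 + complex_of_real l \<cdot>\<^sub>m Om (eta d X x)" for l x
  proof -
    have k1: "kron E0 \<tau> \<in> carrier_mat N N" and k2: "kron (eta d X x) \<tau> \<in> carrier_mat N N"
      using E0_carrier eta_carrier tau_carrier by auto
    show ?thesis unfolding eta_lin kron_lin_left[OF E0_carrier eta_carrier] by (rule twirl_lin[OF k1 k2])
  qed
  have homog01: "Phi_tilde \<mu> UR UA d dA X \<tau> (\<lambda>k. l * x k) = l * Phi_tilde \<mu> UR UA d dA X \<tau> x"
    if x: "x \<in> state_coeffs d X" and lx: "(\<lambda>k. l * x k) \<in> state_coeffs d X" and l0: "0 < l" and l1: "l \<le> 1" for l x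
  proof -
    have "V (eta d X (\<lambda>k. l * x k)) = (1 - l) / real d + l * V (eta d X x)"
      by (rule V_mix[OF good_eta[OF x] l0 l1 Om_lin])
    then show ?thesis unfolding Phi_tilde_def PhiV[OF x] PhiV[OF lx] Phi0 by (simp add: algebra_simps diff_divide_distrib)
  qed
  show ?thesis
  proof (intro conjI allI impI ballI)
    fix l :: real and x
    assume l0: "l \<ge> 0" and x: "x \<in> state_coeffs d X" and lx: "(\<lambda>k. l * x k) \<in> state_coeffs d X"
    show "Phi_tilde \<mu> UR UA d dA X \<tau> (\<lambda>k. l * x k) = l * Phi_tilde \<mu> UR UA d dA X \<tau> x"
    proof (cases "l \<le> 1")
      case True
      show ?thesis
      proof (cases "l = 0")
        case True
        then show ?thesis unfolding Phi_tilde_def by simp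
      next
        case False
        then show ?thesis using homog01[OF x lx _ \<open>l \<le> 1\<close>] l0 by simp
      qed
    next
      case False
      then have l1: "l > 1" by simp
      have xe: "(\<lambda>k. (1 / l) * (l * x k)) = x" using l1 by auto
      have "Phi_tilde \<mu> UR UA d dA X \<tau> (\<lambda>k. (1 / l) * (l * x k)) = (1 / l) * Phi_tilde \<mu> UR UA d dA X \<tau> (\<lambda>k. l * x k)"
        by (rule homog01[OF lx]) (use xe x l1 in auto)
      then show ?thesis unfolding xe using l1 by (simp add: field_simps)
    qed
  next
    fix x assume x: "x \<in> state_coeffs d X"
    show "Phi_tilde \<mu> UR UA d dA X \<tau> x \<ge> 0"
      unfolding Phi_tilde_def PhiV[OF x] Phi0 using V_ge[OF good_eta[OF x]] by simp
  qed
qed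

end
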